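(* Let $\mathscr{D}_n^\gamma$ be the set of all $n$-vertex trees with domination number $\gamma$. If $T\in\mathscr{D}_n^\gamma$ has the maximum value of $\xi^{ee}$ over $\mathscr{D}_n^\gamma$, then $\gamma(T)=\beta(T)=\gamma$, where $\beta(T)$ is the matching number of $T$.
   Context: For a vertex $x$ of a connected graph $G$, $\varepsilon_G(x)$ is its eccentricity and $d_G(x)$ its degree; $\xi^{ee}(G)=\sum_{uv\in E(G)}\left(\frac{1}{\varepsilon_G(u)}+\frac{1}{\varepsilon_G(v)}\right)=\sum_{x}\frac{d_G(x)}{\varepsilon_G(x)}$. The domination number $\gamma(G)$ is the minimum size of a set $D$ of vertices such that every vertex is in $D$ or adjacent to a vertex of $D$; the matching number $\beta(G)$ is the maximum number of pairwise disjoint edges. *)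

theory Defs
  imports Complex_Main
begin

definition simple_graph :: "'a set \<Rightarrow> 'a set set \<Rightarrow> bool" where
  "simple_graph V E \<longleftrightarrow> finite V \<and> (\<forall>e\<in>E. e \<subseteq> V \<and> card e = 2)"

definition is_walk :: "'a set \<Rightarrow> 'a set set \<Rightarrow> 'a list \<Rightarrow> bool" where
  "is_walk V E xs \<longleftrightarrow> xs \<noteq> [] \<and> set xs \<subseteq> V \<and>
     (\<forall>i < length xs - 1. {xs ! i, xs ! Suc i} \<in> E)"

definition connected_graph :: "'a set \<Rightarrow> 'a set set \<Rightarrow> bool" where
  "connected_graph V E \<longleftrightarrow>
     (\<forall>u\<in>V. \<forall>v\<in>V. \<exists>xs. is_walk V E xs \<and> hd xs = u \<and> last xs = v)"

definition has_cycle :: "'a set \<Rightarrow> 'a set set \<Rightarrow> bool" where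
  "has_cycle V E \<longleftrightarrow>
     (\<exists>xs. is_walk V E xs \<and> distinct xs \<and> length xs \<ge> 3 \<and> {last xs, hd xs} \<in> E)"

definition is_tree :: "'a set \<Rightarrow> 'a set set \<Rightarrow> bool" where
  "is_tree V E \<longleftrightarrow> simple_graph V E \<and> V \<noteq> {} \<and> connected_graph V E \<and> \<not> has_cycle V E"

definition gdist :: "'a set \<Rightarrow> 'a set set \<Rightarrow> 'a \<Rightarrow> 'a \<Rightarrow> nat" where
  "gdist V E u v = (LEAST k. \<exists>xs. is_walk V E xs \<and> hd xs = u \<and> last xs = v \<and> length xs = Suc k)"

definition ecc :: "'a set \<Rightarrow> 'a set set \<Rightarrow> 'a \<Rightarrow> nat" where
  "ecc V E x = Max ((\<lambda>y. gdist V E x y) ` V)"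

definition degree :: "'a set set \<Rightarrow> 'a \<Rightarrow> nat" where
  "degree E x = card {e \<in> E. x \<in> e}"

definition xi_ee :: "'a set \<Rightarrow> 'a set set \<Rightarrow> real" where
  "xi_ee V E = (\<Sum>x\<in>V. real (degree E x) / real (ecc V E x))"

definition dominating_set :: "'a set \<Rightarrow> 'a set set \<Rightarrow> 'a set \<Rightarrow> bool" where
  "dominating_set V E D \<longleftrightarrow> D \<subseteq> V \<and> (\<forall>v\<in>V. v \<in> D \<or> (\<exists>u\<in>D. {u, v} \<in> E))"

definition domination_number :: "'a set \<Rightarrow> 'a set set \<Rightarrow> nat" where
  "domination_number V E = Min (card ` {D. dominating_set V E D})"

definition is_matching :: "'a set set \<Rightarrow> 'a set set \<Rightarrow> bool" where
  "is_matching E M \<longleftrightarrow> M \<subseteq> E \<and> (\<forall>e1\<in>M. \<forall>e2\<in>M. e1 \<noteq> e2 \<longrightarrow> e1 \<inter> e2 = {})"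

definition matching_number :: "'a set set \<Rightarrow> nat" where
  "matching_number E = Max (card ` {M. is_matching E M})"

end

theory Submission
  imports Defs
begin


lemma walk_single[simp]: "is_walk V E [a] \<longleftrightarrow> a \<in> V"
  by (simp add: is_walk_def)

lemma walk_cons2[simp]: "is_walk V E (a # b # xs) \<longleftrightarrow> a \<in> V \<and> {a,b} \<in> E \<and> is_walk V E (b # xs)"
proof
  assume h: "is_walk V E (a # b # xs)"
  have "{(a#b#xs)!0, (a#b#xs)! Suc 0} \<in> E" using h unfolding is_walk_def by auto
  moreover have "\<forall>i < length (b#xs) - 1. {(b#xs) ! i, (b#xs) ! Suc i} \<in> E"
  proof (intro allI impI)
    fix i assume "i < length (b#xs) - 1"
    then have "Suc i < length (a#b#xs) - 1" by simp
    then have "{(a#b#xs) ! Suc i, (a#b#xs) ! Suc (Suc i)} \<in> E" using h unfolding is_walk_def by blast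
    then show "{(b#xs) ! i, (b#xs) ! Suc i} \<in> E" by simp
  qed
  ultimately show "a \<in> V \<and> {a,b} \<in> E \<and> is_walk V E (b # xs)" using h unfolding is_walk_def by auto
next
  assume h: "a \<in> V \<and> {a,b} \<in> E \<and> is_walk V E (b # xs)"
  show "is_walk V E (a # b # xs)" unfolding is_walk_def
  proof (intro conjI allI impI)
    show "a # b # xs \<noteq> []" by simp
    show "set (a # b # xs) \<subseteq> V" using h unfolding is_walk_def by auto
    fix i assume i: "i < length (a # b # xs) - 1"
    show "{(a # b # xs) ! i, (a # b # xs) ! Suc i} \<in> E"
    proof (cases i)
      case 0 then show ?thesis using h by simp
    next
      case (Suc j)
      then have "j < length (b#xs) - 1" using i by simp
      then have "{(b#xs) ! j, (b#xs) ! Suc j} \<in> E" using h unfolding is_walk_def by blast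
      then show ?thesis using Suc by simp
    qed
  qed
qed

lemma walk_nonempty: "is_walk V E xs \<Longrightarrow> xs \<noteq> []" by (simp add: is_walk_def)

lemma walk_set: "is_walk V E xs \<Longrightarrow> set xs \<subseteq> V" by (simp add: is_walk_def)

lemma walk_mono: "is_walk V' E' xs \<Longrightarrow> V' \<subseteq> V \<Longrightarrow> E' \<subseteq> E \<Longrightarrow> is_walk V E xs"
  unfolding is_walk_def by blast

lemma walk_snoc: "is_walk V E xs \<Longrightarrow> b \<in> V \<Longrightarrow> {last xs, b} \<in> E \<Longrightarrow> is_walk V E (xs @ [b])"
proof (induction xs rule: induct_list012)
  case 1 then show ?case by (simp add: is_walk_def)
next
  case (2 x) then show ?case by simp
next
  case (3 x y zs) then show ?case by simp
qed

lemma walk_append: "is_walk V E xs \<Longrightarrow> is_walk V E ys \<Longrightarrow> last xs = hd ys \<Longrightarrow> is_walk V E (xs @ tl ys)"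
proof (induction xs rule: induct_list012)
  case 1 then show ?case by (simp add: is_walk_def)
next
  case (2 x) then show ?case by (cases ys) (auto simp: is_walk_def)
next
  case (3 x y zs) then show ?case by simp
qed

lemma walk_rev: "is_walk V E xs \<Longrightarrow> is_walk V E (rev xs)"
proof (induction xs rule: induct_list012)
  case 1 then show ?case by (simp add: is_walk_def)
next
  case (2 x) then show ?case by simp
next
  case (3 x y zs)
  then have "is_walk V E (rev (y#zs))" by simp
  moreover have "last (rev (y#zs)) = y" by simp
  ultimately have "is_walk V E (rev (y#zs) @ [x])"
    using 3 by (intro walk_snoc) (auto simp: insert_commute)
  then show ?case by simp
qed

lemma walk_drop: "is_walk V E xs \<Longrightarrow> j < length xs \<Longrightarrow> is_walk V E (drop j xs)"
proof (induction xs arbitrary: j rule: induct_list012)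
  case 1 then show ?case by simp
next
  case (2 x) then show ?case by simp
next
  case (3 x y zs) then show ?case by (cases j) auto
qed

lemma walk_edge: "is_walk V E xs \<Longrightarrow> Suc i < length xs \<Longrightarrow> {xs!i, xs!Suc i} \<in> E"
  unfolding is_walk_def by auto

lemma short_walk:
  assumes "is_walk V E xs" "length xs \<le> 4"
  shows "(length xs = 1 \<and> hd xs = last xs) \<or> (length xs = 2 \<and> {hd xs, last xs} \<in> E)
   \<or> (length xs = 3 \<and> (\<exists>a. {hd xs, a} \<in> E \<and> {a, last xs} \<in> E))
   \<or> (length xs = 4 \<and> (\<exists>a b. {hd xs, a} \<in> E \<and> {a, b} \<in> E \<and> {b, last xs} \<in> E))"
proof -
  have ne: "xs \<noteq> []" using assms walk_nonempty by blast
  show ?thesis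
  proof (cases xs)
    case Nil with ne show ?thesis by simp
  next
    case (Cons a r) note xa = this
    show ?thesis
    proof (cases r)
      case Nil then show ?thesis using xa by simp
    next
      case (Cons b r2) note rb = this
      show ?thesis
      proof (cases r2)
        case Nil then show ?thesis using xa rb assms by simp
      next
        case (Cons c r3) note rc = this
        show ?thesis
        proof (cases r3)
          case Nil then show ?thesis using xa rb rc assms by auto
        next
          case (Cons d r4)
          then have "r4 = []" using xa rb rc assms by simp
          then show ?thesis using xa rb rc Cons assms by auto
        qed
      qed
    qed
  qed
qed

lemma gdist_le:
  assumes "is_walk V E xs" "hd xs = u" "last xs = v"
  shows "gdist V E u v \<le> length xs - 1"
proof -
  have "length xs = Suc (length xs - 1)" using walk_nonempty[OF assms(1)] by (cases xs) auto
  then show ?thesis unfolding gdist_def using assms by (intro Least_le) blast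
qed

lemma gdist_ex:
  assumes "connected_graph V E" "u \<in> V" "v \<in> V"
  shows "\<exists>xs. is_walk V E xs \<and> hd xs = u \<and> last xs = v \<and> length xs = Suc (gdist V E u v)"
proof -
  obtain xs where xs: "is_walk V E xs" "hd xs = u" "last xs = v"
    using assms unfolding connected_graph_def by blast
  have "length xs = Suc (length xs - 1)" using walk_nonempty[OF xs(1)] by (cases xs) auto
  then have "\<exists>k. \<exists>xs. is_walk V E xs \<and> hd xs = u \<and> last xs = v \<and> length xs = Suc k" using xs by blast
  then show ?thesis unfolding gdist_def by (rule LeastI_ex)
qed

lemma gdist_ge:
  assumes "connected_graph V E" "u \<in> V" "v \<in> V"
    and "\<And>xs. is_walk V E xs \<Longrightarrow> hd xs = u \<Longrightarrow> last xs = v \<Longrightarrow> length xs \<le> k \<Longrightarrow> False"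
  shows "k \<le> gdist V E u v"
proof -
  obtain xs where "is_walk V E xs" "hd xs = u" "last xs = v" "length xs = Suc (gdist V E u v)"
    using gdist_ex[OF assms(1-3)] by blast
  then show ?thesis using assms(4) by (metis not_less_eq_eq)
qed

lemma ecc_ge: "finite V \<Longrightarrow> y \<in> V \<Longrightarrow> gdist V E x y \<le> ecc V E x"
  unfolding ecc_def by (rule Max_ge) auto

lemma ecc_le: "finite V \<Longrightarrow> V \<noteq> {} \<Longrightarrow> (\<And>y. y \<in> V \<Longrightarrow> gdist V E x y \<le> b) \<Longrightarrow> ecc V E x \<le> b"
  unfolding ecc_def by (subst Max_le_iff) auto


lemma edge_props:
  assumes "simple_graph V E" "{a,b} \<in> E"
  shows "a \<noteq> b" "a \<in> V" "b \<in> V"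
  using assms unfolding simple_graph_def by (auto simp: card_insert_if split: if_splits)

lemma simple_finE: "simple_graph V E \<Longrightarrow> finite E"
  unfolding simple_graph_def by (meson Pow_iff finite_Pow_iff rev_finite_subset subsetI)

lemma edge_form: "simple_graph V E \<Longrightarrow> e \<in> E \<Longrightarrow> \<exists>a b. e = {a,b} \<and> a \<noteq> b"
  unfolding simple_graph_def by (auto simp: card_2_iff)

lemma double_count:
  assumes "simple_graph V E"
  shows "(\<Sum>x\<in>V. real (degree E x) * w x) = (\<Sum>e\<in>E. \<Sum>x\<in>e. w x)"
proof -
  have fV: "finite V" using assms simple_graph_def by blast
  have fE: "finite E" using simple_finE[OF assms] .
  have "(\<Sum>x\<in>V. real (degree E x) * w x) = (\<Sum>x\<in>V. \<Sum>e\<in>{e. e \<in> E \<and> x \<in> e}. w x)"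
    by (simp add: degree_def)
  also have "\<dots> = (\<Sum>e\<in>E. \<Sum>x\<in>{x. x \<in> V \<and> x \<in> e}. w x)"
    by (rule sum.swap_restrict[OF fV fE])
  also have "\<dots> = (\<Sum>e\<in>E. \<Sum>x\<in>e. w x)"
  proof (rule sum.cong[OF refl])
    fix e assume "e \<in> E"
    then have "{x. x \<in> V \<and> x \<in> e} = e" using assms unfolding simple_graph_def by blast
    then show "(\<Sum>x\<in>{x. x \<in> V \<and> x \<in> e}. w x) = (\<Sum>x\<in>e. w x)" by simp
  qed
  finally show ?thesis .
qed

lemma handshake3:
  assumes "simple_graph V E"
  shows "(\<Sum>x\<in>V. real (degree E x) * (1/3)) = 2 * real (card E) / 3"
proof -
  have "(\<Sum>x\<in>V. real (degree E x) * (1/3)) = (\<Sum>e\<in>E. \<Sum>x\<in>e. (1/3::real))"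
    by (rule double_count[OF assms])
  also have "\<dots> = (\<Sum>e\<in>E. 2/3)"
  proof (rule sum.cong[OF refl])
    fix e assume "e \<in> E" then have "card e = 2" using assms simple_graph_def by blast
    then show "(\<Sum>x\<in>e. (1/3::real)) = 2/3" by simp
  qed
  finally show ?thesis by simp
qed


lemma leaf_exists:
  assumes sg: "simple_graph V E" and ne: "V \<noteq> {}" and nc: "\<not> has_cycle V E"
  shows "\<exists>v\<in>V. card {e \<in> E. v \<in> e} \<le> 1"
proof -
  have fV: "finite V" using sg unfolding simple_graph_def by auto
  let ?W = "{xs. is_walk V E xs \<and> distinct xs}"
  have bnd: "\<forall>xs\<in>?W. length xs \<le> card V"
  proof
    fix xs assume "xs \<in> ?W"
    then have "set xs \<subseteq> V" "distinct xs" using walk_set by auto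
    then have "card (set xs) \<le> card V" using fV by (intro card_mono) auto
    moreover have "card (set xs) = length xs" using \<open>distinct xs\<close> by (rule distinct_card)
    ultimately show "length xs \<le> card V" by simp
  qed
  obtain v0 where "v0 \<in> V" using ne by blast
  then have "[v0] \<in> ?W" by simp
  then have nel: "length ` ?W \<noteq> {}" by blast
  have "length ` ?W \<subseteq> {..card V}" using bnd by auto
  then have finl: "finite (length ` ?W)" by (rule finite_subset) simp
  obtain xs where xs: "xs \<in> ?W" "length xs = Max (length ` ?W)"
    using Max_in[OF finl nel] by auto
  have maxl: "\<And>ys. ys \<in> ?W \<Longrightarrow> length ys \<le> length xs"
    using xs(2) finl by simp
  have wxs: "is_walk V E xs" and dxs: "distinct xs" using xs by auto
  have xne: "xs \<noteq> []" using walk_nonempty[OF wxs] .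
  let ?a = "last xs"
  have aV: "?a \<in> V" using walk_set[OF wxs] xne by auto
  have inxs: "b \<in> set xs" if "{?a, b} \<in> E" for b
  proof (rule ccontr)
    assume "b \<notin> set xs"
    have "is_walk V E (xs @ [b])" using walk_snoc[OF wxs edge_props(3)[OF sg that] that] .
    then have "xs @ [b] \<in> ?W" using dxs \<open>b \<notin> set xs\<close> by simp
    then show False using maxl by fastforce
  qed
  have nb: "b = xs ! (length xs - 2)" if eab: "{?a, b} \<in> E" for b
  proof (rule ccontr)
    assume nb: "b \<noteq> xs ! (length xs - 2)"
    obtain j where j: "j < length xs" "xs ! j = b" using inxs[OF eab] by (metis in_set_conv_nth)
    have ab: "?a \<noteq> b" using edge_props[OF sg eab] by simp
    have la: "?a = xs ! (length xs - 1)" using xne by (simp add: last_conv_nth)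
    have "j \<noteq> length xs - 1" using ab la j by auto
    moreover have "j \<noteq> length xs - 2" using nb j by auto
    ultimately have jl: "j + 3 \<le> length xs" using j by linarith
    let ?ys = "drop j xs"
    have "is_walk V E ?ys" using walk_drop[OF wxs j(1)] .
    moreover have "distinct ?ys" using dxs by simp
    moreover have "length ?ys \<ge> 3" using jl by simp
    moreover have "hd ?ys = b" using j by (simp add: hd_drop_conv_nth)
    moreover have "last ?ys = ?a" using j by simp
    moreover have "{last ?ys, hd ?ys} \<in> E" using eab j by (simp add: hd_drop_conv_nth)
    ultimately have "has_cycle V E" unfolding has_cycle_def by blast
    then show False using nc by simp
  qed
  show ?thesis
  proof (rule bexI[OF _ aV], rule ccontr)
    assume "\<not> card {e \<in> E. ?a \<in> e} \<le> 1"
    then have "card {e \<in> E. ?a \<in> e} \<ge> 2" by simp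
    moreover have fin: "finite {e \<in> E. ?a \<in> e}" using simple_finE[OF sg] by simp
    ultimately have "\<not> (\<forall>x\<in>{e \<in> E. ?a \<in> e}. \<forall>y\<in>{e \<in> E. ?a \<in> e}. x = y)"
      using card_le_Suc0_iff_eq[OF fin] by simp
    then obtain e1 e2 where e: "e1 \<in> E" "e2 \<in> E" "?a \<in> e1" "?a \<in> e2" "e1 \<noteq> e2"
      by blast
    obtain b1 where b1: "e1 = {?a, b1}" using edge_form[OF sg e(1)] e(3) by blast
    obtain b2 where b2: "e2 = {?a, b2}" using edge_form[OF sg e(2)] e(4) by blast
    have "b1 = xs ! (length xs - 2)" using nb e(1) b1 by simp
    moreover have "b2 = xs ! (length xs - 2)" using nb e(2) b2 by simp
    ultimately show False using e(5) b1 b2 by simp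
  qed
qed

lemma forest_edges:
  assumes "simple_graph V E" "\<not> has_cycle V E" "V \<noteq> {}"
  shows "card E + 1 \<le> card V"
  using assms
proof (induction "card V" arbitrary: V E rule: less_induct)
  case less
  have fV: "finite V" using less.prems(1) unfolding simple_graph_def by auto
  have fE: "finite E" using simple_finE[OF less.prems(1)] .
  obtain v where v: "v \<in> V" "card {e \<in> E. v \<in> e} \<le> 1" using leaf_exists[OF less.prems(1,3,2)] by blast
  show ?case
  proof (cases "V = {v}")
    case True
    have "E = {}"
    proof (rule ccontr)
      assume "E \<noteq> {}" then obtain e where "e \<in> E" by blast
      then have "e \<subseteq> {v}" "card e = 2" using less.prems(1) True unfolding simple_graph_def by auto
      then have "card e \<le> card {v}" by (intro card_mono) auto
      then show False using \<open>card e = 2\<close> by simp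
    qed
    then show ?thesis using True by simp
  next
    case False
    let ?V = "V - {v}" and ?E = "{e \<in> E. v \<notin> e}"
    have sg: "simple_graph ?V ?E" using less.prems(1) unfolding simple_graph_def by auto
    have nc: "\<not> has_cycle ?V ?E"
    proof
      assume "has_cycle ?V ?E"
      then obtain xs where "is_walk ?V ?E xs" "distinct xs" "length xs \<ge> 3" "{last xs, hd xs} \<in> ?E"
        unfolding has_cycle_def by blast
      moreover have "is_walk V E xs" by (rule walk_mono[OF \<open>is_walk ?V ?E xs\<close>]) auto
      ultimately have "has_cycle V E" unfolding has_cycle_def by blast
      then show False using less.prems(2) by simp
    qed
    have ne: "?V \<noteq> {}" using False v(1) by blast
    have lt: "card ?V < card V" by (rule card_Diff1_less[OF fV v(1)])
    have ih: "card ?E + 1 \<le> card ?V" using less.hyps[OF lt sg nc ne] .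
    have "E = ?E \<union> {e \<in> E. v \<in> e}" by blast
    then have "card E \<le> card ?E + card {e \<in> E. v \<in> e}" using card_Un_le by metis
    moreover have "card ?V = card V - 1" using v(1) fV by simp
    ultimately show ?thesis using ih v(2) lt by linarith
  qed
qed


lemma matchings_finite: "finite E \<Longrightarrow> finite {M. is_matching E M}"
  unfolding is_matching_def by (rule finite_subset[of _ "Pow E"]) auto

lemma matching_le: "finite E \<Longrightarrow> is_matching E M \<Longrightarrow> card M \<le> matching_number E"
  unfolding matching_number_def by (rule Max_ge) (auto intro: finite_imageI matchings_finite)

lemma matching_ex: "finite E \<Longrightarrow> \<exists>M. is_matching E M \<and> card M = matching_number E"
proof -
  assume f: "finite E"
  have "is_matching E {}" by (simp add: is_matching_def)
  then have ne: "card ` {M. is_matching E M} \<noteq> {}" by blast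
  have "matching_number E \<in> card ` {M. is_matching E M}"
    unfolding matching_number_def by (rule Max_in) (use f matchings_finite ne in auto)
  then show ?thesis by auto
qed

lemma matching_card_bound:
  assumes sg: "simple_graph V E" and m: "is_matching E M"
  shows "2 * card M \<le> card V"
proof -
  have fE: "finite E" using simple_finE[OF sg] .
  have MsE: "M \<subseteq> E" using m is_matching_def by blast
  have fM: "finite M" using finite_subset[OF MsE fE] .
  have pw: "pairwise disjnt M" using m unfolding is_matching_def pairwise_def disjnt_def by blast
  have fin: "\<And>A. A \<in> M \<Longrightarrow> finite A" using MsE sg unfolding simple_graph_def
    by (metis card.infinite subsetD zero_neq_numeral)
  have "card (\<Union>M) = sum card M" by (rule card_Union_disjoint[OF pw fin])
  also have "\<dots> = sum (\<lambda>_. 2) M" using MsE sg unfolding simple_graph_def by (intro sum.cong) auto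
  also have "\<dots> = 2 * card M" by simp
  finally have "card (\<Union>M) = 2 * card M" .
  moreover have "\<Union>M \<subseteq> V" using MsE sg unfolding simple_graph_def by blast
  moreover have "finite V" using sg simple_graph_def by auto
  ultimately show ?thesis by (metis card_mono)
qed

lemma doms_finite: "finite V \<Longrightarrow> finite {D. dominating_set V E D}"
  unfolding dominating_set_def by (rule finite_subset[of _ "Pow V"]) auto

lemma dom_le: "finite V \<Longrightarrow> dominating_set V E D \<Longrightarrow> domination_number V E \<le> card D"
  unfolding domination_number_def by (rule Min_le) (auto intro: finite_imageI doms_finite)

lemma dom_ex: "finite V \<Longrightarrow> \<exists>D. dominating_set V E D \<and> card D = domination_number V E"
proof -
  assume f: "finite V"
  have "dominating_set V E V" by (simp add: dominating_set_def)
  then have ne: "card ` {D. dominating_set V E D} \<noteq> {}" by blast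
  have "domination_number V E \<in> card ` {D. dominating_set V E D}"
    unfolding domination_number_def by (rule Min_in) (use f doms_finite ne in auto)
  then show ?thesis by auto
qed

lemma dom_pos: "finite V \<Longrightarrow> V \<noteq> {} \<Longrightarrow> domination_number V E \<ge> 1"
proof -
  assume f: "finite V" and ne: "V \<noteq> {}"
  obtain D where D: "dominating_set V E D" "card D = domination_number V E" using dom_ex[OF f] by blast
  have "D \<noteq> {}" using D(1) ne unfolding dominating_set_def by blast
  moreover have "finite D" using D(1) f unfolding dominating_set_def using finite_subset by blast
  ultimately show ?thesis using D(2) by (metis One_nat_def Suc_leI card_gt_0_iff)
qed

lemma no_isolated:
  assumes "is_tree V E" "card V \<ge> 2" "v \<in> V"
  shows "\<exists>a. {v,a} \<in> E"
proof -
  have fV: "finite V" using assms(1) unfolding is_tree_def simple_graph_def by auto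
  have "\<exists>u\<in>V. u \<noteq> v"
  proof (rule ccontr)
    assume "\<not> ?thesis" then have "V \<subseteq> {v}" by blast
    then have "card V \<le> 1" using card_mono[of "{v}" V] by simp
    then show False using assms(2) by simp
  qed
  then obtain u where u: "u \<in> V" "u \<noteq> v" by blast
  obtain xs where xs: "is_walk V E xs" "hd xs = v" "last xs = u"
    using assms(1) u(1) assms(3) unfolding is_tree_def connected_graph_def by blast
  obtain y ys where xy: "xs = y # ys" using walk_nonempty[OF xs(1)] by (cases xs) auto
  then have "ys \<noteq> []" using xs u(2) by auto
  then obtain z zs where "ys = z # zs" by (cases ys) auto
  then show ?thesis using xs xy by auto
qed

lemma dom_le_match:
  assumes tr: "is_tree V E" and n2: "card V \<ge> 2"
  shows "domination_number V E \<le> matching_number E"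
proof -
  have sg: "simple_graph V E" using tr is_tree_def by blast
  have fV: "finite V" using sg simple_graph_def by auto
  have fE: "finite E" using simple_finE[OF sg] .
  obtain M where M: "is_matching E M" "card M = matching_number E" using matching_ex[OF fE] by blast
  have MsE: "M \<subseteq> E" using M(1) is_matching_def by blast
  have fM: "finite M" using finite_subset[OF MsE fE] .
  have disj: "\<And>e1 e2. e1 \<in> M \<Longrightarrow> e2 \<in> M \<Longrightarrow> e1 \<noteq> e2 \<Longrightarrow> e1 \<inter> e2 = {}"
    using M(1) unfolding is_matching_def by blast
  let ?U = "\<Union>M"
  let ?P = "\<lambda>e a. a \<in> e \<and> (\<exists>w\<in>V - ?U. {a,w} \<in> E)"
  define s where "s e = (if \<exists>a. ?P e a then SOME a. ?P e a else SOME a. a \<in> e)" for e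
  have s_in: "s e \<in> e" if eM: "e \<in> M" for e
  proof -
    obtain a b where "e = {a,b}" using edge_form[OF sg] eM MsE by blast
    then have "\<exists>a. a \<in> e" by blast
    then have "(SOME a. a \<in> e) \<in> e" by (rule someI_ex)
    moreover have "\<exists>a. ?P e a \<Longrightarrow> (SOME a. ?P e a) \<in> e" using someI_ex[of "?P e"] by blast
    ultimately show ?thesis unfolding s_def by auto
  qed
  have s_P: "?P e (s e)" if ex: "\<exists>a. ?P e a" for e
  proof -
    have "s e = (SOME a. ?P e a)" using ex unfolding s_def by simp
    then show ?thesis using someI_ex[OF ex] by simp
  qed
  have aug: False if "is_matching E M'" "card M' > card M" for M'
    using matching_le[OF fE that(1)] M(2) that(2) by simp
  let ?D = "s ` M"
  have Dsub: "?D \<subseteq> V" using s_in MsE sg unfolding simple_graph_def by blast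
  have dom: "dominating_set V E ?D"
    unfolding dominating_set_def
  proof (intro conjI ballI Dsub)
    fix v assume vV: "v \<in> V"
    show "v \<in> ?D \<or> (\<exists>u\<in>?D. {u, v} \<in> E)"
    proof (cases "v \<in> ?U")
      case True
      then obtain e where e: "e \<in> M" "v \<in> e" by blast
      obtain a b where ab: "e = {a,b}" "a \<noteq> b" using edge_form[OF sg] e(1) MsE by blast
      have "s e \<in> e" using s_in[OF e(1)] .
      show ?thesis
      proof (cases "s e = v")
        case True then show ?thesis using e(1) by blast
      next
        case False
        then have "{s e, v} = e" using ab e(2) \<open>s e \<in> e\<close> by auto
        then have "{s e, v} \<in> E" using e(1) MsE by auto
        then show ?thesis using e(1) by blast
      qed
    next
      case False
      obtain a where va: "{v,a} \<in> E" using no_isolated[OF tr n2 vV] by blast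
      have aU: "a \<in> ?U"
      proof (rule ccontr)
        assume anU: "a \<notin> ?U"
        let ?M' = "insert {v,a} M"
        have "{v,a} \<notin> M" using False by blast
        then have c: "card ?M' = Suc (card M)" using fM by simp
        have im: "is_matching E ?M'" unfolding is_matching_def
          using MsE va disj False anU by blast
        have "card ?M' > card M" using c by simp
        then show False using aug[OF im] by blast
      qed
      then obtain e where e: "e \<in> M" "a \<in> e" by blast
      obtain b where ab: "e = {a,b}" "a \<noteq> b" using edge_form[OF sg] e MsE by blast
      have av: "a \<noteq> v" using edge_props[OF sg va] by simp
      have vnot: "v \<notin> e" using False e(1) by blast
      have av': "{a,v} \<in> E" using va by (simp add: insert_commute)
      have vVU: "v \<in> V - ?U" using vV False by blast
      have ex: "\<exists>a'. ?P e a'"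
        using e(2) av' vVU by blast
      have seD: "s e \<in> ?D" using e(1) by blast
      have Pse: "?P e (s e)" using s_P[OF ex] .
      show ?thesis
      proof (cases "s e = a")
        case True then show ?thesis using seD av' by metis
      next
        case False
        then have sb: "s e = b" using Pse ab by auto
        obtain w where w: "w \<in> V - ?U" "{b,w} \<in> E" using Pse sb by blast
        show ?thesis
        proof (cases "w = v")
          case True then show ?thesis using seD w(2) sb by metis
        next
          case wv: False
          let ?M' = "insert {v,a} (insert {b,w} (M - {e}))"
          have wU: "w \<notin> ?U" using w by blast
          have vU: "v \<notin> ?U" using \<open>v \<notin> ?U\<close> .
          have bU: "b \<in> ?U" using e ab by blast
          have n1: "{b,w} \<notin> M - {e}" using wU by blast
          have vnb: "v \<noteq> b" using vU bU by blast
          have anw: "a \<noteq> w" using aU wU by blast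
          have vbw: "v \<notin> {b,w}" using vnb wv by simp
          have n2': "{v,a} \<notin> insert {b,w} (M - {e})"
          proof
            assume "{v,a} \<in> insert {b,w} (M - {e})"
            then have "{v,a} = {b,w} \<or> {v,a} \<in> M" by blast
            then show False using vbw vU by blast
          qed
          have "card (M - {e}) = card M - 1" using e(1) fM by simp
          moreover have "card M > 0" using e(1) fM by (auto simp: card_gt_0_iff)
          moreover have "card ?M' = Suc (Suc (card (M - {e})))" using n1 n2' fM by simp
          ultimately have c: "card ?M' > card M" by simp
          have others: "\<And>e'. e' \<in> M - {e} \<Longrightarrow> a \<notin> e' \<and> b \<notin> e'"
            using disj e(1) ab by blast
          have "is_matching E ?M'" unfolding is_matching_def
          proof (intro conjI ballI impI)
            show "?M' \<subseteq> E" using MsE va w(2) by blast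
            fix e1 e2 assume "e1 \<in> ?M'" "e2 \<in> ?M'" "e1 \<noteq> e2"
            have f1: "{v,a} \<inter> {b,w} = {}" using vnb wv ab(2) anw by auto
            have f2: "{v,a} \<inter> e' = {}" if "e' \<in> M - {e}" for e'
            proof -
              have "v \<notin> e'" using vU that by blast
              moreover have "a \<notin> e'" using others[OF that] by simp
              ultimately show ?thesis by auto
            qed
            have f3: "{b,w} \<inter> e' = {}" if "e' \<in> M - {e}" for e'
            proof -
              have "w \<notin> e'" using wU that by blast
              moreover have "b \<notin> e'" using others[OF that] by simp
              ultimately show ?thesis by auto
            qed
            have c1: "e1 = {v,a} \<or> e1 = {b,w} \<or> e1 \<in> M - {e}" using \<open>e1 \<in> ?M'\<close> by blast
            have c2: "e2 = {v,a} \<or> e2 = {b,w} \<or> e2 \<in> M - {e}" using \<open>e2 \<in> ?M'\<close> by blast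
            show "e1 \<inter> e2 = {}"
              using c1 c2 \<open>e1 \<noteq> e2\<close>
            proof (elim disjE)
              assume "e1 = {v,a}" "e2 = {b,w}" then show ?thesis using f1 by simp
            next
              assume "e1 = {v,a}" "e2 \<in> M - {e}" then show ?thesis using f2 by simp
            next
              assume "e1 = {b,w}" "e2 = {v,a}" then show ?thesis using f1 by (simp add: Int_commute)
            next
              assume "e1 = {b,w}" "e2 \<in> M - {e}" then show ?thesis using f3 by simp
            next
              assume "e1 \<in> M - {e}" "e2 = {v,a}" then show ?thesis using f2[of e1] by (simp add: Int_commute)
            next
              assume "e1 \<in> M - {e}" "e2 = {b,w}" then show ?thesis using f3[of e1] by (simp add: Int_commute)
            next
              assume "e1 \<in> M - {e}" "e2 \<in> M - {e}" "e1 \<noteq> e2" then show ?thesis using disj by simp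
            qed simp_all
          qed
          then show ?thesis using aug[OF _ c] by blast
        qed
      qed
    qed
  qed
  have "domination_number V E \<le> card ?D" using dom_le[OF fV dom] .
  also have "card ?D \<le> card M" using card_image_le[OF fM] .
  finally show ?thesis using M(2) by simp
qed


lemma cycle_false:
  assumes "is_tree V E" "is_walk V E xs" "distinct xs" "3 \<le> length xs" "{last xs, hd xs} \<in> E"
  shows False
  using assms unfolding is_tree_def has_cycle_def by blast

lemma gamma1_match:
  assumes tr: "is_tree V E" and g1: "domination_number V E = 1"
  shows "matching_number E \<le> 1"
proof -
  have sg: "simple_graph V E" using tr is_tree_def by blast
  have fV: "finite V" using sg simple_graph_def by auto
  have fE: "finite E" using simple_finE[OF sg] .
  obtain D where D0: "dominating_set V E D" "card D = domination_number V E" using dom_ex[OF fV] by blast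
  have D: "dominating_set V E D" "card D = 1" using D0 g1 by simp_all
  from D(2) obtain x where Dx: "D = {x}" by (auto simp: card_1_singleton_iff)
  have xV: "x \<in> V" using D(1) Dx unfolding dominating_set_def by blast
  have adj: "v = x \<or> {x,v} \<in> E" if "v \<in> V" for v
    using D(1) Dx that unfolding dominating_set_def by auto
  have xe: "x \<in> e" if eE: "e \<in> E" for e
  proof (rule ccontr)
    assume nx: "x \<notin> e"
    obtain a b where ab: "e = {a,b}" "a \<noteq> b" using edge_form[OF sg eE] by blast
    have aV: "a \<in> V" and bV: "b \<in> V" using edge_props[OF sg] eE ab by auto
    have xa: "{x,a} \<in> E" using adj[OF aV] nx ab by auto
    have xb: "{x,b} \<in> E" using adj[OF bV] nx ab by auto
    have "is_walk V E [x,a,b]" using xV aV bV xa eE ab by simp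
    moreover have "distinct [x,a,b]" using nx ab by auto
    moreover have "{last [x,a,b], hd [x,a,b]} \<in> E" using xb by (simp add: insert_commute)
    ultimately show False using cycle_false[OF tr] by fastforce
  qed
  obtain M where M: "is_matching E M" "card M = matching_number E" using matching_ex[OF fE] by blast
  have MsE: "M \<subseteq> E" using M(1) is_matching_def by blast
  have fM: "finite M" using finite_subset[OF MsE fE] .
  have "\<forall>e1\<in>M. \<forall>e2\<in>M. e1 = e2"
  proof (intro ballI)
    fix e1 e2 assume "e1 \<in> M" "e2 \<in> M"
    then have "x \<in> e1 \<inter> e2" using xe MsE by blast
    then show "e1 = e2" using M(1) \<open>e1 \<in> M\<close> \<open>e2 \<in> M\<close> unfolding is_matching_def by blast
  qed
  then have "card M \<le> Suc 0" using card_le_Suc0_iff_eq[OF fM] by blast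
  then show ?thesis using M(2) by simp
qed

lemma xi_le_weights:
  assumes sg: "simple_graph V E" and w: "\<And>x. x \<in> V \<Longrightarrow> w x > 0 \<and> real (ecc V E x) * w x \<ge> 1"
  shows "xi_ee V E \<le> (\<Sum>e\<in>E. \<Sum>x\<in>e. w x)"
proof -
  have "xi_ee V E \<le> (\<Sum>x\<in>V. real (degree E x) * w x)"
    unfolding xi_ee_def
  proof (rule sum_mono)
    fix x assume xV: "x \<in> V"
    have wp: "w x > 0" and ew: "real (ecc V E x) * w x \<ge> 1" using w[OF xV] by auto
    have ep: "real (ecc V E x) > 0"
    proof (rule ccontr)
      assume "\<not> real (ecc V E x) > 0"
      then have "ecc V E x = 0" by simp
      then show False using ew by simp
    qed
    have "real (degree E x) = real (degree E x) * 1" by simp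
    also have "\<dots> \<le> real (degree E x) * (real (ecc V E x) * w x)"
      by (rule mult_left_mono[OF ew]) simp
    finally have "real (degree E x) \<le> (real (degree E x) * w x) * real (ecc V E x)" by (simp add: ac_simps)
    then show "real (degree E x) / real (ecc V E x) \<le> real (degree E x) * w x"
      using pos_divide_le_eq[OF ep] by blast
  qed
  also have "\<dots> = (\<Sum>e\<in>E. \<Sum>x\<in>e. w x)" by (rule double_count[OF sg])
  finally show ?thesis .
qed

lemma xi_ge_weights:
  assumes sg: "simple_graph V E" and w: "\<And>x. x \<in> V \<Longrightarrow> ecc V E x \<ge> 1 \<and> real (ecc V E x) * w x \<le> 1"
  shows "xi_ee V E \<ge> (\<Sum>e\<in>E. \<Sum>x\<in>e. w x)"
proof -
  have "(\<Sum>e\<in>E. \<Sum>x\<in>e. w x) = (\<Sum>x\<in>V. real (degree E x) * w x)" by (rule double_count[OF sg, symmetric])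
  also have "\<dots> \<le> xi_ee V E"
    unfolding xi_ee_def
  proof (rule sum_mono)
    fix x assume xV: "x \<in> V"
    have e1: "ecc V E x \<ge> 1" and ew: "real (ecc V E x) * w x \<le> 1" using w[OF xV] by auto
    have ep: "real (ecc V E x) > 0" using e1 by simp
    have "(real (degree E x) * w x) * real (ecc V E x) = real (degree E x) * (real (ecc V E x) * w x)"
      by (simp add: ac_simps)
    also have "\<dots> \<le> real (degree E x) * 1"
      by (rule mult_left_mono[OF ew]) simp
    finally have "(real (degree E x) * w x) * real (ecc V E x) \<le> real (degree E x)" by simp
    then show "real (degree E x) * w x \<le> real (degree E x) / real (ecc V E x)"
      using pos_le_divide_eq[OF ep] by blast
  qed
  finally show ?thesis .
qed

lemma sum_pair: "a \<noteq> b \<Longrightarrow> (\<Sum>x\<in>{a,b}. (w x :: real)) = w a + w b"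
  by simp


lemma ecc_ge_k:
  assumes tr: "is_tree V E" and xV: "x \<in> V" and yV: "y \<in> V"
    and nw: "\<And>xs. is_walk V E xs \<Longrightarrow> hd xs = x \<Longrightarrow> last xs = y \<Longrightarrow> length xs \<le> k \<Longrightarrow> False"
  shows "k \<le> ecc V E x"
proof -
  have sg: "simple_graph V E" and cg: "connected_graph V E" using tr is_tree_def by auto
  have fV: "finite V" using sg simple_graph_def by auto
  have "k \<le> gdist V E x y" using gdist_ge[OF cg xV yV] nw by blast
  also have "\<dots> \<le> ecc V E x" using ecc_ge[OF fV yV] .
  finally show ?thesis .
qed

lemma core_case1:
  assumes tr: "is_tree V E"
    and H: "\<And>c. c \<in> V \<Longrightarrow> \<exists>y\<in>V. y \<noteq> c \<and> {c,y} \<notin> E \<and> \<not> (\<exists>a. {c,a} \<in> E \<and> {a,y} \<in> E)"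
  shows "xi_ee V E \<le> 2 * real (card E) / 3"
proof -
  have sg: "simple_graph V E" using tr is_tree_def by auto
  have "xi_ee V E \<le> (\<Sum>e\<in>E. \<Sum>x\<in>e. (1/3::real))"
  proof (rule xi_le_weights[OF sg])
    fix x assume xV: "x \<in> V"
    obtain y where y: "y \<in> V" "y \<noteq> x" "{x,y} \<notin> E" "\<not> (\<exists>a. {x,a} \<in> E \<and> {a,y} \<in> E)"
      using H[OF xV] by blast
    have "3 \<le> ecc V E x"
    proof (rule ecc_ge_k[OF tr xV y(1)])
      fix xs assume w: "is_walk V E xs" "hd xs = x" "last xs = y" "length xs \<le> 3"
      then show False using short_walk[OF w(1)] y by auto
    qed
    then show "(1/3::real) > 0 \<and> real (ecc V E x) * (1/3) \<ge> 1" by simp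
  qed
  also have "\<dots> = (\<Sum>e\<in>E. 2/3)"
  proof (rule sum.cong[OF refl])
    fix e assume "e \<in> E" then have "card e = 2" using sg unfolding simple_graph_def by blast
    then show "(\<Sum>x\<in>e. (1/3::real)) = 2/3" by simp
  qed
  finally show ?thesis by simp
qed


lemma core_case2:
  assumes tr: "is_tree V E" and b3: "matching_number E \<ge> 3"
    and cV: "c \<in> V" and H: "\<And>y. y \<in> V \<Longrightarrow> y = c \<or> {c,y} \<in> E \<or> (\<exists>a. {c,a} \<in> E \<and> {a,y} \<in> E)"
  shows "xi_ee V E \<le> 5 * (real (card V) - 1) / 6 - (real (matching_number E) - 1) / 4"
proof -
  have sg: "simple_graph V E" using tr is_tree_def by auto
  have fV: "finite V" using sg simple_graph_def by auto
  have fE: "finite E" using simple_finE[OF sg] .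
  define N where "N = {u \<in> V. {c,u} \<in> E}"
  define R where "R = V - {c} - N"
  have cN: "c \<notin> N" using edge_props(1)[OF sg] unfolding N_def by blast
  have NR: "N \<inter> R = {}" unfolding R_def by blast
  have cR: "c \<notin> R" unfolding R_def by blast
  have Vsplit: "V = insert c (N \<union> R)" using cV unfolding R_def N_def by blast
  have NV: "N \<subseteq> V" and RV: "R \<subseteq> V" unfolding N_def R_def by auto
  have fN: "finite N" and fR: "finite R" using finite_subset[OF NV fV] finite_subset[OF RV fV] .
  have uN: "u \<in> N \<Longrightarrow> {c,u} \<in> E \<and> u \<in> V \<and> u \<noteq> c" for u using cN unfolding N_def by auto
  have RV1: "r \<in> R \<Longrightarrow> r \<in> V" for r using RV by blast
  have rR: "r \<in> R \<Longrightarrow> r \<in> V \<and> r \<noteq> c \<and> {c,r} \<notin> E" for r unfolding R_def N_def by auto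
  have Nind: False if "u \<in> N" "u' \<in> N" "{u,u'} \<in> E" for u u'
  proof -
    have uu: "u \<noteq> u'" using edge_props(1)[OF sg that(3)] .
    have "is_walk V E [c,u,u']" using uN[OF that(1)] uN[OF that(2)] that(3) cV by simp
    moreover have "distinct [c,u,u']" using uN[OF that(1)] uN[OF that(2)] uu by auto
    moreover have "{last [c,u,u'], hd [c,u,u']} \<in> E" using uN[OF that(2)] by (simp add: insert_commute)
    ultimately show False using cycle_false[OF tr] by fastforce
  qed
  have Puniq: "u = u'" if "r \<in> R" "u \<in> N" "u' \<in> N" "{u,r} \<in> E" "{u',r} \<in> E" for r u u'
  proof (rule ccontr)
    assume uu: "u \<noteq> u'"
    have "is_walk V E [c,u,r,u']" using uN[OF that(2)] uN[OF that(3)] rR[OF that(1)] that(4,5) cV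
      by (simp add: insert_commute)
    moreover have "distinct [c,u,r,u']" using uN[OF that(2)] uN[OF that(3)] rR[OF that(1)] uu NR that by auto
    moreover have "{last [c,u,r,u'], hd [c,u,r,u']} \<in> E" using uN[OF that(3)] by (simp add: insert_commute)
    ultimately show False using cycle_false[OF tr] by fastforce
  qed
  have Pex: "\<exists>u. u \<in> N \<and> {u,r} \<in> E" if "r \<in> R" for r
  proof -
    have "\<exists>a. {c,a} \<in> E \<and> {a,r} \<in> E" using H[of r] rR[OF that] by auto
    then obtain a where a: "{c,a} \<in> E" "{a,r} \<in> E" by blast
    have "a \<in> V" using edge_props(3)[OF sg a(1)] .
    then have "a \<in> N" using a(1) unfolding N_def by blast
    then show ?thesis using a(2) by blast
  qed
  define p where "p r = (SOME u. u \<in> N \<and> {u,r} \<in> E)" for r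
  have pN: "p r \<in> N" and pr: "{p r, r} \<in> E" if "r \<in> R" for r
    using someI_ex[OF Pex[OF that]] unfolding p_def by auto
  have Rind: False if "r \<in> R" "r' \<in> R" "{r,r'} \<in> E" for r r'
  proof -
    have rr: "r \<noteq> r'" using edge_props(1)[OF sg that(3)] .
    show False
    proof (cases "p r = p r'")
      case True
      let ?u = "p r"
      have "is_walk V E [?u,r,r']" using uN[OF pN[OF that(1)]] rR[OF that(1)] rR[OF that(2)] pr[OF that(1)] that(3) by simp
      moreover have "distinct [?u,r,r']" using pN[OF that(1)] NR that rr by auto
      moreover have "{last [?u,r,r'], hd [?u,r,r']} \<in> E" using pr[OF that(2)] True by (simp add: insert_commute)
      ultimately show False using cycle_false[OF tr] by fastforce
    next
      case False
      have "is_walk V E [c, p r, r, r', p r']"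
        using uN[OF pN[OF that(1)]] uN[OF pN[OF that(2)]] rR[OF that(1)] rR[OF that(2)] pr[OF that(1)] pr[OF that(2)] that(3) cV
        by (simp add: insert_commute)
      moreover have "distinct [c, p r, r, r', p r']"
        using pN[OF that(1)] pN[OF that(2)] NR that rr False cN cR by auto
      moreover have "{last [c, p r, r, r', p r'], hd [c, p r, r, r', p r']} \<in> E"
        using uN[OF pN[OF that(2)]] by (simp add: insert_commute)
      ultimately show False using cycle_false[OF tr] by fastforce
    qed
  qed
  have Rnb: "y = p r" if "r \<in> R" "{r,y} \<in> E" for r y
  proof -
    have yV: "y \<in> V" using edge_props(3)[OF sg that(2)] .
    have "y \<noteq> c" using rR[OF that(1)] that(2) by (auto simp: insert_commute)
    moreover have "y \<notin> R" using Rind[OF that(1) _ that(2)] by blast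
    ultimately have yN: "y \<in> N" using yV Vsplit by blast
    show ?thesis using Puniq[OF that(1) yN pN[OF that(1)]] that(2) pr[OF that(1)] by (simp add: insert_commute)
  qed
  obtain M where M: "is_matching E M" "card M = matching_number E" using matching_ex[OF fE] by blast
  have MsE: "M \<subseteq> E" using M(1) is_matching_def by blast
  have fM: "finite M" using finite_subset[OF MsE fE] .
  have disj: "\<And>e1 e2. e1 \<in> M \<Longrightarrow> e2 \<in> M \<Longrightarrow> e1 \<noteq> e2 \<Longrightarrow> e1 \<inter> e2 = {}"
    using M(1) unfolding is_matching_def by blast
  let ?Mc = "{e \<in> M. c \<in> e}" and ?MR = "{e \<in> M. c \<notin> e}"
  have Mc1: "card ?Mc \<le> 1"
  proof -
    have "\<forall>e1\<in>?Mc. \<forall>e2\<in>?Mc. e1 = e2" using disj by blast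
    then show ?thesis using card_le_Suc0_iff_eq[of ?Mc] fM by simp
  qed
  have MRform: "\<exists>r\<in>R. e = {p r, r}" if "e \<in> ?MR" for e
  proof -
    have eE: "e \<in> E" and ce: "c \<notin> e" using that MsE by auto
    obtain a b where ab: "e = {a,b}" "a \<noteq> b" using edge_form[OF sg eE] by blast
    have aV: "a \<in> V" and bV: "b \<in> V" using edge_props[OF sg] eE ab by auto
    have ac: "a \<noteq> c" "b \<noteq> c" using ce ab by auto
    show ?thesis
    proof (cases "a \<in> R")
      case True
      then have "b = p a" using Rnb eE ab by blast
      then show ?thesis using True ab by (auto simp: insert_commute)
    next
      case False
      then have aN: "a \<in> N" using aV ac Vsplit by blast
      have "b \<notin> N" using Nind[OF aN] eE ab by blast
      then have bR: "b \<in> R" using bV ac Vsplit by blast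
      then have "a = p b" using Rnb[OF bR] eE ab by (simp add: insert_commute)
      then show ?thesis using bR ab by blast
    qed
  qed
  have MRsub: "?MR \<subseteq> (\<lambda>r. {p r, r}) ` R" using MRform by blast
  have cardMR: "card ?MR \<le> card R"
    using card_mono[OF finite_imageI[OF fR] MRsub] card_image_le[OF fR, of "\<lambda>r. {p r, r}"] by linarith
  have Msplit: "M = ?Mc \<union> ?MR" by blast
  have cardM: "card M \<le> card ?Mc + card ?MR" using card_Un_le Msplit by metis
  have bnd: "real (matching_number E) \<le> 1 + real (card R)" using cardM Mc1 cardMR M(2) by linarith
  have MR2: "card ?MR \<ge> 2" using cardM Mc1 M(2) b3 by linarith
  obtain r1 r2 where r12: "r1 \<in> R" "r2 \<in> R" "p r1 \<noteq> p r2"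
  proof -
    have fMR: "finite ?MR" using fM by simp
    have "\<not> (\<forall>e1\<in>?MR. \<forall>e2\<in>?MR. e1 = e2)" using MR2 card_le_Suc0_iff_eq[OF fMR] by linarith
    then obtain e1 e2 where e: "e1 \<in> ?MR" "e2 \<in> ?MR" "e1 \<noteq> e2" by blast
    obtain r1 where r1: "r1 \<in> R" "e1 = {p r1, r1}" using MRform[OF e(1)] by blast
    obtain r2 where r2: "r2 \<in> R" "e2 = {p r2, r2}" using MRform[OF e(2)] by blast
    have "e1 \<inter> e2 = {}" using disj e by blast
    then have "p r1 \<noteq> p r2" using r1 r2 by auto
    then show ?thesis using that r1 r2 by blast
  qed
  define w where "w x = (if x = c then 1/2 else if x \<in> N then 1/3 else (1/4::real))" for x
  have xi_le: "xi_ee V E \<le> (\<Sum>e\<in>E. \<Sum>x\<in>e. w x)"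
  proof (rule xi_le_weights[OF sg])
    fix x assume xV: "x \<in> V"
    consider "x = c" | "x \<in> N" | "x \<in> R" using xV Vsplit by blast
    then show "w x > 0 \<and> real (ecc V E x) * w x \<ge> 1"
    proof cases
      case 1
      have "2 \<le> ecc V E x"
      proof (rule ecc_ge_k[OF tr xV RV1[OF r12(1)]])
        fix xs assume wk: "is_walk V E xs" "hd xs = x" "last xs = r1" "length xs \<le> 2"
        then show False using short_walk[OF wk(1)] rR[OF r12(1)] 1 by auto
      qed
      then show ?thesis using 1 unfolding w_def by simp
    next
      case 2
      have xc: "x \<noteq> c" using 2 cN by blast
      obtain r where r: "r \<in> R" "p r \<noteq> x" using r12 by metis
      have "3 \<le> ecc V E x"
      proof (rule ecc_ge_k[OF tr xV RV1[OF r(1)]])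
        fix xs assume wk: "is_walk V E xs" "hd xs = x" "last xs = r" "length xs \<le> 3"
        have "x \<noteq> r" using 2 r(1) NR by blast
        moreover have "{x,r} \<notin> E" using Rnb[OF r(1)] r(2) by (metis insert_commute)
        moreover have "\<not> (\<exists>a. {x,a} \<in> E \<and> {a,r} \<in> E)"
        proof
          assume "\<exists>a. {x,a} \<in> E \<and> {a,r} \<in> E"
          then obtain a where a: "{x,a} \<in> E" "{a,r} \<in> E" by blast
          have "a = p r" using Rnb[OF r(1)] a(2) by (metis insert_commute)
          then show False using Nind[OF 2 pN[OF r(1)]] a(1) by simp
        qed
        ultimately show False using short_walk[OF wk(1)] wk by auto
      qed
      then show ?thesis using 2 xc unfolding w_def by simp
    next
      case 3
      have xc: "x \<noteq> c" "x \<notin> N" using 3 cR NR by auto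
      obtain r where r: "r \<in> R" "p r \<noteq> p x" using r12 by metis
      have "4 \<le> ecc V E x"
      proof (rule ecc_ge_k[OF tr xV RV1[OF r(1)]])
        fix xs assume wk: "is_walk V E xs" "hd xs = x" "last xs = r" "length xs \<le> 4"
        have "x \<noteq> r" using r(2) by blast
        moreover have "{x,r} \<notin> E" using Rind[OF 3 r(1)] by blast
        moreover have "\<not> (\<exists>a. {x,a} \<in> E \<and> {a,r} \<in> E)"
        proof
          assume "\<exists>a. {x,a} \<in> E \<and> {a,r} \<in> E"
          then obtain a where a: "{x,a} \<in> E" "{a,r} \<in> E" by blast
          have "a = p x" using Rnb[OF 3] a(1) by blast
          moreover have "a = p r" using Rnb[OF r(1)] a(2) by (metis insert_commute)
          ultimately show False using r(2) by simp
        qed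
        moreover have "\<not> (\<exists>a b. {x,a} \<in> E \<and> {a,b} \<in> E \<and> {b,r} \<in> E)"
        proof
          assume "\<exists>a b. {x,a} \<in> E \<and> {a,b} \<in> E \<and> {b,r} \<in> E"
          then obtain a b where a: "{x,a} \<in> E" "{a,b} \<in> E" "{b,r} \<in> E" by blast
          have "a = p x" using Rnb[OF 3] a(1) by blast
          moreover have "b = p r" using Rnb[OF r(1)] a(3) by (metis insert_commute)
          ultimately show False using Nind[OF pN[OF 3] pN[OF r(1)]] a(2) by simp
        qed
        ultimately show False using short_walk[OF wk(1)] wk by auto
      qed
      then show ?thesis using xc unfolding w_def by simp
    qed
  qed
  let ?E1 = "(\<lambda>u. {c,u}) ` N" and ?E2 = "(\<lambda>r. {p r, r}) ` R"
  have Eeq: "E = ?E1 \<union> ?E2"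
  proof
    show "E \<subseteq> ?E1 \<union> ?E2"
    proof
      fix e assume eE: "e \<in> E"
      obtain a b where ab: "e = {a,b}" "a \<noteq> b" using edge_form[OF sg eE] by blast
      have aV: "a \<in> V" and bV: "b \<in> V" using edge_props[OF sg] eE ab by auto
      show "e \<in> ?E1 \<union> ?E2"
      proof (cases "c \<in> e")
        case True
        then obtain u where "e = {c,u}" using ab by blast
        moreover then have "u \<in> N" using eE edge_props(3)[OF sg] unfolding N_def by (metis (mono_tags, lifting) mem_Collect_eq)
        ultimately show ?thesis by blast
      next
        case False
        then have "e \<in> ?MR" if "e \<in> M" using that by blast
        show ?thesis
        proof (cases "a \<in> R")
          case True
          then have "b = p a" using Rnb eE ab by blast
          then show ?thesis using True ab by (auto simp: insert_commute)
        next
          case aR: False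
          have ac: "a \<noteq> c" "b \<noteq> c" using False ab by auto
          then have aN: "a \<in> N" using aV aR Vsplit by blast
          have "b \<notin> N" using Nind[OF aN] eE ab by blast
          then have bR: "b \<in> R" using bV ac Vsplit by blast
          then have "a = p b" using Rnb[OF bR] eE ab by (simp add: insert_commute)
          then show ?thesis using bR ab by blast
        qed
      qed
    qed
  next
    show "?E1 \<union> ?E2 \<subseteq> E" using uN pr by blast
  qed
  have dis12: "?E1 \<inter> ?E2 = {}"
  proof (rule ccontr)
    assume "?E1 \<inter> ?E2 \<noteq> {}"
    then obtain u r where ur: "u \<in> N" "r \<in> R" "{c,u} = {p r, r}" by blast
    then have "r = c \<or> r = u" by (metis insertI1 insertI2 insert_commute insert_iff singletonD)
    then show False using ur cR NR by blast
  qed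
  have inj1: "inj_on (\<lambda>u. {c,u}) N"
    by (rule inj_onI) (metis cN doubleton_eq_iff)
  have inj2: "inj_on (\<lambda>r. {p r, r}) R"
  proof (rule inj_onI)
    fix r r' assume rr: "r \<in> R" "r' \<in> R" "{p r, r} = {p r', r'}"
    then have "r = r' \<or> r = p r'" by (metis doubleton_eq_iff)
    then show "r = r'" using pN[OF rr(2)] rr(1) NR by blast
  qed
  have fE1: "finite ?E1" and fE2: "finite ?E2" using fN fR by auto
  have "(\<Sum>e\<in>E. \<Sum>x\<in>e. w x) = (\<Sum>e\<in>?E1. \<Sum>x\<in>e. w x) + (\<Sum>e\<in>?E2. \<Sum>x\<in>e. w x)"
    unfolding Eeq by (rule sum.union_disjoint[OF fE1 fE2 dis12])
  also have "(\<Sum>e\<in>?E1. \<Sum>x\<in>e. w x) = (\<Sum>u\<in>N. \<Sum>x\<in>{c,u}. w x)"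
    by (rule sum.reindex[OF inj1, unfolded comp_def])
  also have "\<dots> = (\<Sum>u\<in>N. 5/6)"
  proof (rule sum.cong[OF refl])
    fix u assume u: "u \<in> N"
    then have "u \<noteq> c" using cN by blast
    then show "(\<Sum>x\<in>{c,u}. w x) = 5/6" using u unfolding w_def by simp
  qed
  also have "(\<Sum>e\<in>?E2. \<Sum>x\<in>e. w x) = (\<Sum>r\<in>R. \<Sum>x\<in>{p r, r}. w x)"
    by (rule sum.reindex[OF inj2, unfolded comp_def])
  also have "\<dots> = (\<Sum>r\<in>R. 7/12)"
  proof (rule sum.cong[OF refl])
    fix r assume r: "r \<in> R"
    have "p r \<noteq> r" "p r \<noteq> c" "p r \<in> N" "r \<noteq> c" "r \<notin> N"
      using pN[OF r] r NR cN cR by auto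
    then show "(\<Sum>x\<in>{p r, r}. w x) = 7/12" unfolding w_def by simp
  qed
  finally have esum: "(\<Sum>e\<in>E. \<Sum>x\<in>e. w x) = 5/6 * real (card N) + 7/12 * real (card R)" by simp
  have cardV: "card V = Suc (card N + card R)"
    using Vsplit fN fR NR cN cR by (simp add: card_Un_disjoint)
  have cv: "real (card V) - 1 = real (card N) + real (card R)" using cardV by simp
  have e1: "5 * (real (card V) - 1) / 6 = 5/6 * real (card N) + 5/6 * real (card R)"
    unfolding cv by (simp add: field_simps)
  have e2: "(real (matching_number E) - 1) / 4 \<le> real (card R) / 4" using bnd by simp
  show ?thesis unfolding e1 using xi_le esum e2 by linarith
qed


lemma core:
  assumes tr: "is_tree V E" and b3: "matching_number E \<ge> 3"
  shows "xi_ee V E \<le> 5 * (real (card V) - 1) / 6 - (real (matching_number E) - 1) / 4"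
proof (cases "\<exists>c\<in>V. \<forall>y\<in>V. y = c \<or> {c,y} \<in> E \<or> (\<exists>a. {c,a} \<in> E \<and> {a,y} \<in> E)")
  case True
  then obtain c where "c \<in> V" "\<And>y. y \<in> V \<Longrightarrow> y = c \<or> {c,y} \<in> E \<or> (\<exists>a. {c,a} \<in> E \<and> {a,y} \<in> E)" by blast
  then show ?thesis using core_case2[OF tr b3] by blast
next
  case False
  then have H: "\<And>c. c \<in> V \<Longrightarrow> \<exists>y\<in>V. y \<noteq> c \<and> {c,y} \<notin> E \<and> \<not> (\<exists>a. {c,a} \<in> E \<and> {a,y} \<in> E)"
    by blast
  have sg: "simple_graph V E" and nc: "\<not> has_cycle V E" and ne: "V \<noteq> {}" using tr is_tree_def by auto
  have fE: "finite E" using simple_finE[OF sg] .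
  have x1: "xi_ee V E \<le> 2 * real (card E) / 3" by (rule core_case1[OF tr H])
  have ce: "card E + 1 \<le> card V" by (rule forest_edges[OF sg nc ne])
  obtain M where M: "is_matching E M" "card M = matching_number E" using matching_ex[OF fE] by blast
  have mb: "2 * card M \<le> card V" by (rule matching_card_bound[OF sg M(1)])
  have "real (card E) \<le> real (card V) - 1" using ce by linarith
  moreover have "2 * real (matching_number E) \<le> real (card V)" using mb M(2) by linarith
  moreover have "5 * (real (card V) - 1) / 6 = 5/6 * real (card V) - 5/6" by simp
  moreover have "(real (matching_number E) - 1) / 4 = real (matching_number E) / 4 - 1/4" by simp
  ultimately show ?thesis using x1 by linarith
qed

definition sp_p :: "nat \<Rightarrow> nat \<Rightarrow> nat" where
  "sp_p k v = (if k < v \<and> v \<le> 2*k then v - k else 0)"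

definition sp_E :: "nat \<Rightarrow> nat \<Rightarrow> nat set set" where
  "sp_E k n = (\<lambda>v. {v, sp_p k v}) ` {1..<n}"

definition sp_wr :: "nat \<Rightarrow> nat \<Rightarrow> nat list" where
  "sp_wr k v = (if v = 0 then [0] else if sp_p k v = 0 then [v, 0] else [v, sp_p k v, 0])"

locale spider =
  fixes k n :: nat
  assumes k1: "1 \<le> k" and kn: "2*k + 2 \<le> n"
begin

abbreviation "p \<equiv> sp_p k"
abbreviation "SE \<equiv> sp_E k n"
abbreviation "SV \<equiv> {0..<n}"

lemma p_lt: "1 \<le> v \<Longrightarrow> p v < v"
  using k1 unfolding sp_p_def by auto

lemma p_le: "p v \<le> k"
  unfolding sp_p_def by auto

lemma pp: "p (p v) = 0"
  using p_le[of v] unfolding sp_p_def[of k "p v"] by auto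

lemma edge_iff: "{a,b} \<in> SE \<longleftrightarrow> (1 \<le> a \<and> a < n \<and> b = p a) \<or> (1 \<le> b \<and> b < n \<and> a = p b)"
  unfolding sp_E_def by (auto simp: doubleton_eq_iff)

lemma edge_iff': "e \<in> SE \<longleftrightarrow> (\<exists>v. 1 \<le> v \<and> v < n \<and> e = {v, p v})"
  unfolding sp_E_def by auto

lemma sg: "simple_graph SV SE"
  unfolding simple_graph_def
proof (intro conjI ballI)
  show "finite SV" by simp
  fix e assume "e \<in> SE"
  then obtain v where v: "1 \<le> v" "v < n" "e = {v, p v}" using edge_iff' by blast
  have "p v < v" using p_lt[OF v(1)] .
  then show "e \<subseteq> SV" "card e = 2" using v by auto
qed

lemma wr_walk: "v < n \<Longrightarrow> is_walk SV SE (sp_wr k v) \<and> hd (sp_wr k v) = v \<and> last (sp_wr k v) = 0"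
proof -
  assume vn: "v < n"
  show ?thesis
  proof (cases "v = 0")
    case True then show ?thesis using vn unfolding sp_wr_def by simp
  next
    case False
    then have v1: "1 \<le> v" by simp
    have e1: "{v, p v} \<in> SE" using edge_iff v1 vn by blast
    have pv: "p v < n" using p_lt[OF v1] vn by simp
    show ?thesis
    proof (cases "p v = 0")
      case True then show ?thesis using e1 vn False unfolding sp_wr_def by simp
    next
      case pv0: False
      have "{p v, 0} \<in> SE" using edge_iff[of "p v" 0] pv pp[of v] pv0 by simp
      then show ?thesis using e1 vn pv False pv0 unfolding sp_wr_def by simp
    qed
  qed
qed

definition h :: "nat \<Rightarrow> nat" where "h v = length (sp_wr k v) - 1"

lemma h_vals: "h 0 = 0" "1 \<le> v \<Longrightarrow> v \<le> k \<Longrightarrow> h v = 1" "k < v \<Longrightarrow> v \<le> 2*k \<Longrightarrow> h v = 2"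
  "2*k < v \<Longrightarrow> h v = 1"
  unfolding h_def sp_wr_def sp_p_def by auto

lemma walk_uv: "u < n \<Longrightarrow> v < n \<Longrightarrow> \<exists>xs. is_walk SV SE xs \<and> hd xs = u \<and> last xs = v \<and> length xs = h u + h v + 1"
proof -
  assume un: "u < n" and vn: "v < n"
  let ?a = "sp_wr k u" and ?b = "sp_wr k v"
  have a: "is_walk SV SE ?a" "hd ?a = u" "last ?a = 0" using wr_walk[OF un] by auto
  have b: "is_walk SV SE ?b" "hd ?b = v" "last ?b = 0" using wr_walk[OF vn] by auto
  have rb: "is_walk SV SE (rev ?b)" "hd (rev ?b) = 0" "last (rev ?b) = v"
    using walk_rev[OF b(1)] b walk_nonempty[OF b(1)] by (auto simp: hd_rev last_rev)
  have w: "is_walk SV SE (?a @ tl (rev ?b))" using walk_append[OF a(1) rb(1)] a(3) rb(2) by simp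
  have ane: "?a \<noteq> []" using walk_nonempty[OF a(1)] .
  have bne: "?b \<noteq> []" using walk_nonempty[OF b(1)] .
  have hd: "hd (?a @ tl (rev ?b)) = u" using ane a(2) by simp
  have last: "last (?a @ tl (rev ?b)) = v"
  proof (cases "tl (rev ?b) = []")
    case True
    then have "length (rev ?b) = 1" using bne by (cases "rev ?b") auto
    then have "last (rev ?b) = hd (rev ?b)" by (cases "rev ?b") auto
    then have "v = 0" using rb by simp
    then show ?thesis using True a(3) by simp
  next
    case False
    then have "last (tl (rev ?b)) = last (rev ?b)" by (cases "rev ?b") auto
    then show ?thesis using False rb(3) by simp
  qed
  have len: "length (?a @ tl (rev ?b)) = h u + h v + 1"
    unfolding h_def using ane bne by (cases ?a; cases ?b) auto
  show ?thesis using w hd last len by blast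
qed

lemma connected: "connected_graph SV SE"
  unfolding connected_graph_def using walk_uv by fastforce

lemma gdist_h: "u < n \<Longrightarrow> v < n \<Longrightarrow> gdist SV SE u v \<le> h u + h v"
  using walk_uv gdist_le by fastforce

lemma h_le2: "h v \<le> 2"
  unfolding h_def sp_wr_def by auto

lemma acyclic: "\<not> has_cycle SV SE"
proof
  assume "has_cycle SV SE"
  then obtain xs where xs: "is_walk SV SE xs" "distinct xs" "length xs \<ge> 3" "{last xs, hd xs} \<in> SE"
    unfolding has_cycle_def by blast
  let ?S = "set xs"
  let ?L = "length xs"
  have nb: "\<exists>a\<in>?S. \<exists>b\<in>?S. a \<noteq> b \<and> {v,a} \<in> SE \<and> {v,b} \<in> SE" if vS: "v \<in> ?S" for v
  proof -
    obtain i where i: "i < ?L" "xs ! i = v" using vS in_set_conv_nth[of v xs] by auto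
    have L3: "?L \<ge> 3" using xs(3) .
    have xne: "xs \<noteq> []" using L3 by auto
    have hd0: "hd xs = xs ! 0" using hd_conv_nth[OF xne] .
    have lastL: "last xs = xs ! (?L - 1)" using last_conv_nth[OF xne] .
    have dn: "xs ! a \<noteq> xs ! b" if "a < ?L" "b < ?L" "a \<noteq> b" for a b
      using xs(2) that by (simp add: nth_eq_iff_index_eq)
    consider "i = 0" | "i = ?L - 1" | "0 < i \<and> i < ?L - 1" using i by linarith
    then show ?thesis
    proof cases
      case 1
      have e1: "{xs!0, xs!1} \<in> SE" using walk_edge[OF xs(1), of 0] L3 by simp
      have e2: "{xs!0, xs!(?L - 1)} \<in> SE" using xs(4) hd0 lastL by (simp add: insert_commute)
      have "xs!1 \<noteq> xs!(?L-1)" using dn[of 1 "?L - 1"] L3 by simp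
      moreover have "xs!1 \<in> ?S" "xs!(?L-1) \<in> ?S" using L3 by (auto intro!: nth_mem)
      moreover have "v = xs!0" using i 1 by simp
      ultimately show ?thesis using e1 e2 by blast
    next
      case 2
      have e1: "{xs!(?L-2), xs!Suc (?L-2)} \<in> SE" using walk_edge[OF xs(1), of "?L - 2"] L3 by simp
      have "Suc (?L-2) = ?L - 1" using L3 by simp
      then have e1': "{xs!(?L-1), xs!(?L-2)} \<in> SE" using e1 by (simp add: insert_commute)
      have e2: "{xs!(?L-1), xs!0} \<in> SE" using xs(4) hd0 lastL by simp
      have "xs!(?L-2) \<noteq> xs!0" using dn[of "?L - 2" 0] L3 xne by simp
      moreover have "xs!(?L-2) \<in> ?S" "xs!0 \<in> ?S" using L3 by (auto intro!: nth_mem)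
      moreover have "v = xs!(?L-1)" using i 2 by simp
      ultimately show ?thesis using e1' e2 by blast
    next
      case 3
      have si: "Suc i < ?L" "i - 1 < ?L" "i - 1 \<noteq> Suc i" using 3 by linarith+
      have e1: "{xs!(i-1), xs!Suc (i-1)} \<in> SE" using walk_edge[OF xs(1), of "i - 1"] 3 i(1) by simp
      have "Suc (i-1) = i" using 3 by simp
      then have e1': "{xs!i, xs!(i-1)} \<in> SE" using e1 by (simp add: insert_commute)
      have e2: "{xs!i, xs!Suc i} \<in> SE" using walk_edge[OF xs(1), of i] 3 by (simp add: less_diff_conv)
      have "xs!(i-1) \<noteq> xs!Suc i" using dn[OF si(2,1,3)] .
      moreover have "xs!(i-1) \<in> ?S" "xs!Suc i \<in> ?S" using si by (auto intro!: nth_mem)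
      moreover have "v = xs!i" using i by simp
      ultimately show ?thesis using e1' e2 by blast
    qed
  qed
  have fS: "finite ?S" by simp
  have neS: "?S \<noteq> {}" using xs(3) by auto
  let ?m = "Max ?S"
  have mS: "?m \<in> ?S" using Max_in[OF fS neS] .
  obtain a b where ab: "a \<in> ?S" "b \<in> ?S" "a \<noteq> b" "{?m,a} \<in> SE" "{?m,b} \<in> SE" using nb[OF mS] by blast
  have small: "x = p ?m" if "x \<in> ?S" "{?m,x} \<in> SE" for x
  proof -
    have "x \<le> ?m" using Max_ge[OF fS that(1)] .
    moreover have "x \<noteq> ?m" using that(2) edge_props(1)[OF sg] by blast
    ultimately have xm: "x < ?m" by simp
    show ?thesis using that(2) unfolding edge_iff
    proof
      assume "1 \<le> ?m \<and> ?m < n \<and> x = p ?m" then show ?thesis by simp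
    next
      assume "1 \<le> x \<and> x < n \<and> ?m = p x"
      then have "?m < x" using p_lt by auto
      then show ?thesis using xm by simp
    qed
  qed
  show False using small[OF ab(1) ab(4)] small[OF ab(2) ab(5)] ab(3) by simp
qed

lemma tree: "is_tree SV SE"
  unfolding is_tree_def using sg connected acyclic kn by auto

end


context spider begin

lemma dom_num: "domination_number SV SE = k + 1"
proof -
  have fSV: "finite SV" by simp
  let ?D0 = "{0..k}"
  have dom0: "dominating_set SV SE ?D0"
    unfolding dominating_set_def
  proof (intro conjI ballI)
    show "?D0 \<subseteq> SV" using kn by auto
    fix v assume vV: "v \<in> SV"
    show "v \<in> ?D0 \<or> (\<exists>u\<in>?D0. {u, v} \<in> SE)"
    proof (cases "v \<le> k")
      case True then show ?thesis by simp
    next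
      case False
      then have v1: "1 \<le> v" "v < n" using vV k1 by auto
      have "{p v, v} \<in> SE" using edge_iff[of "p v" v] v1 by simp
      moreover have "p v \<in> ?D0" using p_le[of v] by simp
      ultimately show ?thesis by blast
    qed
  qed
  have c0: "card ?D0 = k + 1" by simp
  have lower: "k + 1 \<le> card D" if D: "dominating_set SV SE D" for D
  proof -
    have DV: "D \<subseteq> SV" using D unfolding dominating_set_def by blast
    have fD: "finite D" using finite_subset[OF DV] by simp
    have A: "i \<in> D \<or> k + i \<in> D" if i: "1 \<le> i" "i \<le> k" for i
    proof -
      have vV: "k + i \<in> SV" using i kn by simp
      have "k + i \<in> D \<or> (\<exists>u\<in>D. {u, k + i} \<in> SE)" using D vV unfolding dominating_set_def by blast
      moreover have "u = i" if "{u, k+i} \<in> SE" for u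
      proof -
        have "p u \<le> k" by (rule p_le)
        then have "\<not> (k + i = p u)" using i by simp
        then have "u = p (k+i)" using that edge_iff by blast
        then show ?thesis using i unfolding sp_p_def by simp
      qed
      ultimately show ?thesis by blast
    qed
    have B: "0 \<in> D \<or> n - 1 \<in> D"
    proof -
      have vV: "n - 1 \<in> SV" using kn by simp
      have "n - 1 \<in> D \<or> (\<exists>u\<in>D. {u, n - 1} \<in> SE)" using D vV unfolding dominating_set_def by blast
      moreover have "u = 0" if "{u, n - 1} \<in> SE" for u
      proof -
        have "p u \<le> k" by (rule p_le)
        then have "\<not> (n - 1 = p u)" using kn k1 by simp
        then have "u = p (n - 1)" using that edge_iff by blast
        moreover have "\<not> (n - 1 \<le> 2*k)" using kn by simp
        ultimately show ?thesis unfolding sp_p_def by simp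
      qed
      ultimately show ?thesis by blast
    qed
    define g where "g i = (if i = 0 then (if 0 \<in> D then 0 else n - 1) else (if i \<in> D then i else k + i))" for i
    have gD: "g ` ?D0 \<subseteq> D"
    proof
      fix x assume "x \<in> g ` ?D0"
      then obtain i where i: "i \<le> k" "x = g i" by auto
      show "x \<in> D"
      proof (cases "i = 0")
        case True then show ?thesis using B i unfolding g_def by auto
      next
        case False then show ?thesis using A[of i] i unfolding g_def by auto
      qed
    qed
    have ginj: "inj_on g ?D0"
    proof (rule inj_onI)
      fix i j assume ij: "i \<in> ?D0" "j \<in> ?D0" "g i = g j"
      show "i = j" using ij kn k1 unfolding g_def by (auto split: if_splits)
    qed
    have "card ?D0 \<le> card D" by (rule card_inj_on_le[OF ginj gD fD])
    then show ?thesis by simp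
  qed
  show ?thesis unfolding domination_number_def
  proof (rule Min_eqI)
    show "finite (card ` {D. dominating_set SV SE D})" using doms_finite[OF fSV] by simp
    show "k + 1 \<in> card ` {D. dominating_set SV SE D}" using dom0 c0 by force
    fix y assume "y \<in> card ` {D. dominating_set SV SE D}"
    then show "k + 1 \<le> y" using lower by auto
  qed
qed

lemma xi_bound: "xi_ee SV SE \<ge> 5 * (real n - 1) / 6 - real k / 4"
proof -
  define w where "w v = (if v = 0 then 1/2 else if v \<le> k then 1/3 else if v \<le> 2*k then 1/4 else (1/3::real))" for v
  have fSV: "finite SV" and neSV: "SV \<noteq> {}" using kn by auto
  have ge: "(\<Sum>e\<in>SE. \<Sum>x\<in>e. w x) \<le> xi_ee SV SE"
  proof (rule xi_ge_weights[OF sg])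
    fix x assume xV: "x \<in> SV"
    have eub: "ecc SV SE x \<le> h x + 2"
    proof (rule ecc_le[OF fSV neSV])
      fix y assume "y \<in> SV"
      then show "gdist SV SE x y \<le> h x + 2" using gdist_h[of x y] h_le2[of y] xV by simp
    qed
    define y where "y = (if x = 0 then 1 else (0::nat))"
    have yV: "y \<in> SV" and yx: "y \<noteq> x" using kn k1 unfolding y_def by auto
    have e1: "1 \<le> ecc SV SE x"
    proof (rule ecc_ge_k[OF tree xV yV])
      fix xs assume wk: "is_walk SV SE xs" "hd xs = x" "last xs = y" "length xs \<le> 1"
      then show False using short_walk[OF wk(1)] yx by auto
    qed
    have "real (ecc SV SE x) * w x \<le> 1"
    proof (cases "x = 0")
      case True
      then have "ecc SV SE x \<le> 2" using eub h_vals(1) by simp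
      then show ?thesis using True unfolding w_def by simp
    next
      case x0: False
      show ?thesis
      proof (cases "x \<le> k")
        case True
        then have "ecc SV SE x \<le> 3" using eub h_vals(2)[of x] x0 by simp
        then show ?thesis using True x0 unfolding w_def by simp
      next
        case False
        show ?thesis
        proof (cases "x \<le> 2*k")
          case True
          then have "ecc SV SE x \<le> 4" using eub h_vals(3)[of x] False by simp
          then show ?thesis using True x0 False unfolding w_def by simp
        next
          case F2: False
          then have "ecc SV SE x \<le> 3" using eub h_vals(4)[of x] by simp
          then show ?thesis using F2 x0 False unfolding w_def by simp
        qed
      qed
    qed
    then show "1 \<le> ecc SV SE x \<and> real (ecc SV SE x) * w x \<le> 1" using e1 by simp
  qed
  have inj: "inj_on (\<lambda>v. {v, p v}) {1..<n}"
  proof (rule inj_onI)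
    fix u v assume uv: "u \<in> {1..<n}" "v \<in> {1..<n}" "{u, p u} = {v, p v}"
    have "p u < u" "p v < v" using p_lt uv by auto
    then show "u = v" using uv(3) by (auto simp: doubleton_eq_iff)
  qed
  have "(\<Sum>e\<in>SE. \<Sum>x\<in>e. w x) = (\<Sum>v\<in>{1..<n}. \<Sum>x\<in>{v, p v}. w x)"
    unfolding sp_E_def by (rule sum.reindex[OF inj, unfolded comp_def])
  also have "\<dots> = (\<Sum>v\<in>{1..<n}. 5/6 - (if v \<in> {k<..2*k} then 1/4 else 0))"
  proof (rule sum.cong[OF refl])
    fix v assume v: "v \<in> {1..<n}"
    have pv: "p v < v" using p_lt v by auto
    then have "(\<Sum>x\<in>{v, p v}. w x) = w v + w (p v)" by simp
    also have "\<dots> = 5/6 - (if v \<in> {k<..2*k} then 1/4 else 0)"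
      using v k1 unfolding w_def sp_p_def by auto
    finally show "(\<Sum>x\<in>{v, p v}. w x) = 5/6 - (if v \<in> {k<..2*k} then 1/4 else 0)" .
  qed
  also have "\<dots> = (\<Sum>v\<in>{1..<n}. 5/6) - (\<Sum>v\<in>{1..<n}. (if v \<in> {k<..2*k} then 1/4 else 0))"
    by (rule sum_subtractf)
  also have "(\<Sum>v\<in>{1..<n}. (if v \<in> {k<..2*k} then (1/4::real) else 0)) = (\<Sum>v\<in>{1..<n} \<inter> {k<..2*k}. 1/4)"
    by (rule sum.inter_restrict[symmetric]) simp
  also have "{1..<n} \<inter> {k<..2*k} = {k<..2*k}" using kn k1 by auto
  finally have "(\<Sum>e\<in>SE. \<Sum>x\<in>e. w x) = 5/6 * real (n - 1) - real k / 4" by simp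
  moreover have "real (n - 1) = real n - 1" using kn by simp
  ultimately show ?thesis using ge by simp
qed

end


locale iso =
  fixes f :: "'b \<Rightarrow> 'a" and S :: "'b set" and Es :: "'b set set"
  assumes inj: "inj_on f S" and esub: "\<And>e. e \<in> Es \<Longrightarrow> e \<subseteq> S"
begin

abbreviation "V' \<equiv> f ` S"
abbreviation "E' \<equiv> (\<lambda>e. f ` e) ` Es"

lemma edge_back: "a \<in> S \<Longrightarrow> b \<in> S \<Longrightarrow> {f a, f b} \<in> E' \<Longrightarrow> {a,b} \<in> Es"
proof -
  assume a: "a \<in> S" and b: "b \<in> S" and e: "{f a, f b} \<in> E'"
  then obtain e0 where e0: "e0 \<in> Es" "{f a, f b} = f ` e0" by blast
  have "f ` {a,b} = f ` e0" using e0(2) by simp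
  moreover have "{a,b} \<subseteq> S" "e0 \<subseteq> S" using a b esub[OF e0(1)] by auto
  ultimately have "{a,b} = e0" using inj_on_image_eq_iff[OF inj] by blast
  then show ?thesis using e0(1) by simp
qed

lemma edge_fwd: "{a,b} \<in> Es \<Longrightarrow> {f a, f b} \<in> E'"
proof -
  assume "{a,b} \<in> Es"
  then have "f ` {a,b} \<in> E'" by blast
  then show ?thesis by simp
qed

lemma walk_fwd: "is_walk S Es xs \<Longrightarrow> is_walk V' E' (map f xs)"
  unfolding is_walk_def
proof (intro conjI allI impI)
  assume w: "xs \<noteq> [] \<and> set xs \<subseteq> S \<and> (\<forall>i<length xs - 1. {xs ! i, xs ! Suc i} \<in> Es)"
  show "map f xs \<noteq> []" using w by simp
  show "set (map f xs) \<subseteq> V'" using w by auto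
  fix i assume i: "i < length (map f xs) - 1"
  then have "{xs ! i, xs ! Suc i} \<in> Es" using w by simp
  then have "{f (xs ! i), f (xs ! Suc i)} \<in> E'" by (rule edge_fwd)
  then show "{map f xs ! i, map f xs ! Suc i} \<in> E'" using i by simp
qed

lemma walk_back: "is_walk V' E' ys \<Longrightarrow> \<exists>xs. ys = map f xs \<and> is_walk S Es xs"
proof -
  assume w: "is_walk V' E' ys"
  define g where "g = inv_into S f"
  let ?xs = "map g ys"
  have sys: "set ys \<subseteq> V'" using walk_set[OF w] .
  have fg: "f (g y) = y" if "y \<in> V'" for y using that unfolding g_def by (simp add: f_inv_into_f)
  have gS: "g y \<in> S" if "y \<in> V'" for y using that unfolding g_def by (simp add: inv_into_into)
  have ys: "ys = map f ?xs" using fg sys by (induction ys) auto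
  have "is_walk S Es ?xs" unfolding is_walk_def
  proof (intro conjI allI impI)
    show "?xs \<noteq> []" using walk_nonempty[OF w] by simp
    show "set ?xs \<subseteq> S" using gS sys by auto
    fix i assume i: "i < length ?xs - 1"
    then have i1: "Suc i < length ys" by simp
    have e: "{ys ! i, ys ! Suc i} \<in> E'" using walk_edge[OF w i1] .
    have yi: "ys ! i \<in> V'" "ys ! Suc i \<in> V'" using sys i1 by auto
    have "{f (g (ys ! i)), f (g (ys ! Suc i))} \<in> E'" using e fg[OF yi(1)] fg[OF yi(2)] by simp
    then have "{g (ys ! i), g (ys ! Suc i)} \<in> Es" using edge_back gS yi by blast
    then show "{?xs ! i, ?xs ! Suc i} \<in> Es" using i1 by simp
  qed
  then show ?thesis using ys by blast
qed

lemma simple: "simple_graph S Es \<Longrightarrow> simple_graph V' E'"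
  unfolding simple_graph_def
proof (intro conjI ballI)
  assume sg: "finite S \<and> (\<forall>e\<in>Es. e \<subseteq> S \<and> card e = 2)"
  show "finite V'" using sg by simp
  fix e' assume "e' \<in> E'"
  then obtain e where e: "e \<in> Es" "e' = f ` e" by blast
  have "inj_on f e" using inj_on_subset[OF inj esub[OF e(1)]] .
  then have "card e' = card e" using e(2) card_image by blast
  then show "card e' = 2" using sg e(1) by simp
  show "e' \<subseteq> V'" using e esub by blast
qed

lemma connected: "connected_graph S Es \<Longrightarrow> connected_graph V' E'"
  unfolding connected_graph_def
proof (intro ballI)
  assume c: "\<forall>u\<in>S. \<forall>v\<in>S. \<exists>xs. is_walk S Es xs \<and> hd xs = u \<and> last xs = v"
  fix u' v' assume "u' \<in> V'" "v' \<in> V'"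
  then obtain u v where uv: "u \<in> S" "v \<in> S" "u' = f u" "v' = f v" by blast
  obtain xs where xs: "is_walk S Es xs" "hd xs = u" "last xs = v" using c uv by blast
  have ne: "xs \<noteq> []" using walk_nonempty[OF xs(1)] .
  have "is_walk V' E' (map f xs)" using walk_fwd[OF xs(1)] .
  moreover have "hd (map f xs) = u'" "last (map f xs) = v'" using ne xs uv by (auto simp: hd_map last_map)
  ultimately show "\<exists>ys. is_walk V' E' ys \<and> hd ys = u' \<and> last ys = v'" by blast
qed

lemma acyclic: "\<not> has_cycle S Es \<Longrightarrow> \<not> has_cycle V' E'"
proof
  assume nc: "\<not> has_cycle S Es" and "has_cycle V' E'"
  then obtain ys where ys: "is_walk V' E' ys" "distinct ys" "length ys \<ge> 3" "{last ys, hd ys} \<in> E'"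
    unfolding has_cycle_def by blast
  obtain xs where xs: "ys = map f xs" "is_walk S Es xs" using walk_back[OF ys(1)] by blast
  have ne: "xs \<noteq> []" using walk_nonempty[OF xs(2)] .
  have sx: "set xs \<subseteq> S" using walk_set[OF xs(2)] .
  have "distinct xs" using ys(2) xs(1) by (simp add: distinct_map)
  moreover have "length xs \<ge> 3" using ys(3) xs(1) by simp
  moreover have "{last xs, hd xs} \<in> Es"
  proof -
    have "{f (last xs), f (hd xs)} \<in> E'" using ys(4) xs(1) ne by (simp add: hd_map last_map)
    moreover have "last xs \<in> S" "hd xs \<in> S" using sx ne by auto
    ultimately show ?thesis using edge_back by blast
  qed
  ultimately have "has_cycle S Es" using xs(2) unfolding has_cycle_def by blast
  then show False using nc by simp
qed

lemma tree: "is_tree S Es \<Longrightarrow> is_tree V' E'"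
  unfolding is_tree_def using simple connected acyclic by blast

lemma gdist_eq:
  assumes u: "u \<in> S" and v: "v \<in> S"
  shows "gdist V' E' (f u) (f v) = gdist S Es u v"
proof -
  have eq: "(\<exists>ys. is_walk V' E' ys \<and> hd ys = f u \<and> last ys = f v \<and> length ys = Suc k) \<longleftrightarrow>
        (\<exists>xs. is_walk S Es xs \<and> hd xs = u \<and> last xs = v \<and> length xs = Suc k)" for k
  proof
    assume "\<exists>ys. is_walk V' E' ys \<and> hd ys = f u \<and> last ys = f v \<and> length ys = Suc k"
    then obtain ys where ys: "is_walk V' E' ys" "hd ys = f u" "last ys = f v" "length ys = Suc k" by blast
    obtain xs where xs: "ys = map f xs" "is_walk S Es xs" using walk_back[OF ys(1)] by blast
    have ne: "xs \<noteq> []" using walk_nonempty[OF xs(2)] .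
    have sx: "set xs \<subseteq> S" using walk_set[OF xs(2)] .
    have "f (hd xs) = f u" "f (last xs) = f v" using ys xs(1) ne by (auto simp: hd_map last_map)
    moreover have "hd xs \<in> S" "last xs \<in> S" using sx ne by auto
    ultimately have "hd xs = u" "last xs = v" using inj u v by (auto dest: inj_onD)
    then show "\<exists>xs. is_walk S Es xs \<and> hd xs = u \<and> last xs = v \<and> length xs = Suc k"
      using xs ys(4) by auto
  next
    assume "\<exists>xs. is_walk S Es xs \<and> hd xs = u \<and> last xs = v \<and> length xs = Suc k"
    then obtain xs where xs: "is_walk S Es xs" "hd xs = u" "last xs = v" "length xs = Suc k" by blast
    have ne: "xs \<noteq> []" using walk_nonempty[OF xs(1)] .
    show "\<exists>ys. is_walk V' E' ys \<and> hd ys = f u \<and> last ys = f v \<and> length ys = Suc k"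
      using walk_fwd[OF xs(1)] xs ne by (intro exI[of _ "map f xs"]) (auto simp: hd_map last_map)
  qed
  show ?thesis unfolding gdist_def eq ..
qed

lemma ecc_eq: "x \<in> S \<Longrightarrow> ecc V' E' (f x) = ecc S Es x"
proof -
  assume x: "x \<in> S"
  have "(\<lambda>y. gdist V' E' (f x) y) ` V' = (\<lambda>y. gdist S Es x y) ` S"
    unfolding image_image using gdist_eq[OF x] by (intro image_cong) auto
  then show ?thesis unfolding ecc_def by simp
qed

lemma degree_eq: "x \<in> S \<Longrightarrow> degree E' (f x) = degree Es x"
proof -
  assume x: "x \<in> S"
  have "{e' \<in> E'. f x \<in> e'} = (\<lambda>e. f ` e) ` {e \<in> Es. x \<in> e}"
  proof
    show "{e' \<in> E'. f x \<in> e'} \<subseteq> (\<lambda>e. f ` e) ` {e \<in> Es. x \<in> e}"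
    proof
      fix e' assume "e' \<in> {e' \<in> E'. f x \<in> e'}"
      then obtain e where e: "e \<in> Es" "e' = f ` e" "f x \<in> f ` e" by blast
      then have "x \<in> e" using inj x esub[OF e(1)] by (auto dest: inj_onD)
      then show "e' \<in> (\<lambda>e. f ` e) ` {e \<in> Es. x \<in> e}" using e by blast
    qed
  qed blast
  moreover have "inj_on (\<lambda>e. f ` e) {e \<in> Es. x \<in> e}"
  proof (rule inj_onI)
    fix a b assume "a \<in> {e \<in> Es. x \<in> e}" "b \<in> {e \<in> Es. x \<in> e}" "f ` a = f ` b"
    then show "a = b" using inj_on_image_eq_iff[OF inj] esub by blast
  qed
  ultimately show ?thesis unfolding degree_def by (simp add: card_image)
qed

lemma xi_eq: "xi_ee V' E' = xi_ee S Es"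
  unfolding xi_ee_def
  by (simp add: sum.reindex[OF inj] degree_eq ecc_eq)

lemma dom_eq: "domination_number V' E' = domination_number S Es"
proof -
  have "card ` {D'. dominating_set V' E' D'} = card ` {D. dominating_set S Es D}"
  proof
    show "card ` {D'. dominating_set V' E' D'} \<subseteq> card ` {D. dominating_set S Es D}"
    proof
      fix c assume "c \<in> card ` {D'. dominating_set V' E' D'}"
      then obtain D' where D': "dominating_set V' E' D'" "c = card D'" by blast
      let ?D = "S \<inter> f -` D'"
      have D'sub: "D' \<subseteq> V'" using D' unfolding dominating_set_def by blast
      have img: "f ` ?D = D'" using D'sub by blast
      have injD: "inj_on f ?D" using inj_on_subset[OF inj] by blast
      have cd: "card ?D = card D'" using card_image[OF injD] img by simp
      have "dominating_set S Es ?D" unfolding dominating_set_def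
      proof (intro conjI ballI)
        show "?D \<subseteq> S" by blast
        fix v assume v: "v \<in> S"
        then have "f v \<in> D' \<or> (\<exists>u'\<in>D'. {u', f v} \<in> E')" using D' unfolding dominating_set_def by blast
        then show "v \<in> ?D \<or> (\<exists>u\<in>?D. {u, v} \<in> Es)"
        proof
          assume "f v \<in> D'" then show ?thesis using v by blast
        next
          assume "\<exists>u'\<in>D'. {u', f v} \<in> E'"
          then obtain u' where u': "u' \<in> D'" "{u', f v} \<in> E'" by blast
          then obtain u where u: "u \<in> ?D" "u' = f u" using img by blast
          have "{u, v} \<in> Es" using edge_back[of u v] u u' v by blast
          then show ?thesis using u by blast
        qed
      qed
      then show "c \<in> card ` {D. dominating_set S Es D}" using D'(2) cd by force
    qed
  next
    show "card ` {D. dominating_set S Es D} \<subseteq> card ` {D'. dominating_set V' E' D'}"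
    proof
      fix c assume "c \<in> card ` {D. dominating_set S Es D}"
      then obtain D where D: "dominating_set S Es D" "c = card D" by blast
      have DS: "D \<subseteq> S" using D unfolding dominating_set_def by blast
      have cd: "card (f ` D) = card D" using card_image[OF inj_on_subset[OF inj DS]] .
      have "dominating_set V' E' (f ` D)" unfolding dominating_set_def
      proof (intro conjI ballI)
        show "f ` D \<subseteq> V'" using DS by blast
        fix v' assume "v' \<in> V'"
        then obtain v where v: "v \<in> S" "v' = f v" by blast
        then have "v \<in> D \<or> (\<exists>u\<in>D. {u, v} \<in> Es)" using D unfolding dominating_set_def by blast
        then show "v' \<in> f ` D \<or> (\<exists>u\<in>f ` D. {u, v'} \<in> E')"
        proof
          assume "v \<in> D" then show ?thesis using v by blast
        next
          assume "\<exists>u\<in>D. {u, v} \<in> Es"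
          then obtain u where u: "u \<in> D" "{u,v} \<in> Es" by blast
          then have "{f u, f v} \<in> E'" using edge_fwd by blast
          then show ?thesis using u v by blast
        qed
      qed
      then show "c \<in> card ` {D'. dominating_set V' E' D'}" using D(2) cd by force
    qed
  qed
  then show ?thesis unfolding domination_number_def by simp
qed

end

theorem lemma4p4:
  fixes V :: "'a set" and E :: "'a set set" and n \<gamma> :: nat
  assumes "n \<ge> 2"
    and "is_tree V E" and "card V = n" and "domination_number V E = \<gamma>"
    and "\<forall>(V' :: 'a set) (E' :: 'a set set). is_tree V' E' \<and> card V' = n \<and> domination_number V' E' = \<gamma>
                 \<longrightarrow> xi_ee V' E' \<le> xi_ee V E"
  shows "domination_number V E = \<gamma> \<and> matching_number E = \<gamma>"
proof -
  note n2 = assms(1) and tr = assms(2) and cV = assms(3) and g = assms(4) and mx = assms(5)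
  have sg: "simple_graph V E" using tr is_tree_def by blast
  have fV: "finite V" using sg simple_graph_def by auto
  have fE: "finite E" using simple_finE[OF sg] .
  have neV: "V \<noteq> {}" using tr is_tree_def by blast
  let ?b = "matching_number E"
  have gb: "\<gamma> \<le> ?b" using dom_le_match[OF tr] n2 cV g by simp
  have g1: "\<gamma> \<ge> 1" using dom_pos[OF fV neV, of E] g by simp
  have "?b = \<gamma>"
  proof (rule ccontr)
    assume "?b \<noteq> \<gamma>"
    then have bg: "?b > \<gamma>" using gb by simp
    have g2: "\<gamma> \<ge> 2"
    proof (rule ccontr)
      assume "\<not> \<gamma> \<ge> 2"
      then have "\<gamma> = 1" using g1 by simp
      then have "?b \<le> 1" using gamma1_match[OF tr] g by simp
      then show False using bg \<open>\<gamma> = 1\<close> by simp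
    qed
    obtain M where M: "is_matching E M" "card M = ?b" using matching_ex[OF fE] by blast
    have b2n: "2 * ?b \<le> n" using matching_card_bound[OF sg M(1)] M(2) cV by simp
    define k where "k = \<gamma> - 1"
    have k1: "1 \<le> k" and kn: "2*k + 2 \<le> n" using g2 bg b2n unfolding k_def by auto
    interpret sp: spider k n using k1 kn by unfold_locales
    obtain f where f: "bij_betw f {0..<card V} V" using ex_bij_betw_nat_finite[OF fV] by blast
    then have injf: "inj_on f {0..<n}" and imf: "f ` {0..<n} = V" using cV by (auto simp: bij_betw_def)
    interpret iz: iso f "{0..<n}" "sp_E k n"
    proof
      show "inj_on f {0..<n}" using injf .
      fix e assume "e \<in> sp_E k n"
      then show "e \<subseteq> {0..<n}" using sp.sg unfolding simple_graph_def by blast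
    qed
    let ?E' = "(\<lambda>e. f ` e) ` sp_E k n"
    have t': "is_tree V ?E'" using iz.tree[OF sp.tree] imf by simp
    have d': "domination_number V ?E' = \<gamma>" using iz.dom_eq sp.dom_num imf k_def g1 by simp
    have x': "xi_ee V ?E' = xi_ee {0..<n} (sp_E k n)" using iz.xi_eq imf by simp
    have "xi_ee V ?E' \<le> xi_ee V E" using mx t' d' cV by blast
    moreover have "xi_ee {0..<n} (sp_E k n) \<ge> 5 * (real n - 1) / 6 - real k / 4" using sp.xi_bound .
    moreover have "xi_ee V E \<le> 5 * (real n - 1) / 6 - (real ?b - 1) / 4"
      using core[OF tr] bg g2 cV by simp
    moreover have "real ?b - 1 \<ge> real k + 1" using bg k_def g1 by simp
    moreover have "(real ?b - 1) / 4 = real ?b / 4 - 1/4" by simp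
    ultimately show False using x' by linarith
  qed
  then show ?thesis using g by simp
qed


end
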